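(* Let $4\le p\le n-1$ and let $S\subset V$ with $0,n\in S$. The min-cut inequality $x((S:V\setminus S))\ge 1$ is valid for $P^p_{0,n}(D)$ if and only if $|S|\le p$, and it is facet defining for $P^p_{0,n}(D)$ if and only if $3\le |S|\le p$ and $|V\setminus S|\ge 2$.
   Context: Let $n$ be a positive integer, $V=\{0,1,\dots,n\}$, and let $D=(V,A)$ be the digraph whose arc set $A$ consists of all ordered pairs $(i,j)$ with $i\neq j$, $i,j\in V$, except that no arc enters node $0$, no arc leaves node $n$, and the arc $(0,n)$ is absent. A $(0,n)$-$p$-path is a simple directed path in $D$ from $0$ to $n$ with exactly $p$ arcs. $P^p_{0,n}(D)\subseteq\mathbb{R}^A$ is the convex hull of the incidence vectors of all $(0,n)$-$p$-paths. For $F\subseteq A$, $x(F)=\sum_{(i,j)\in F}x_{ij}$. For node sets $S,T$, $(S:T)=\{(i,j)\in A: i\in S, j\in T\}$. Facet defining means valid and defining a face of dimension $\dim P^p_{0,n}(D)-1$. *)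

theory Defs
  imports "HOL-Analysis.Analysis" "HOL-Library.Function_Algebras"
begin

text \<open>Real-valued functions on an index type form a real vector space (pointwise).
  We model R^A as functions (nat \<times> nat) \<Rightarrow> real; all incidence vectors vanish outside A.\<close>

instantiation "fun" :: (type, real_vector) real_vector
begin
definition scaleR_fun :: "real \<Rightarrow> ('a \<Rightarrow> 'b) \<Rightarrow> 'a \<Rightarrow> 'b"
  where "scaleR_fun c f = (\<lambda>x. c *\<^sub>R f x)"
instance
  by standard (auto simp: scaleR_fun_def fun_eq_iff scaleR_add_right scaleR_add_left)
end

definition affdim :: "'a::real_vector set \<Rightarrow> int" where
  "affdim X = int (GREATEST k. \<exists>T. T \<subseteq> X \<and> finite T \<and> \<not> affine_dependent T \<and> card T = k) - 1"

text \<open>Node set V = {0..n} and arc set A of the digraph D.\<close>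
definition arcs :: "nat \<Rightarrow> (nat \<times> nat) set" where
  "arcs n = {(i, j). i \<le> n \<and> j \<le> n \<and> i \<noteq> j \<and> j \<noteq> 0 \<and> i \<noteq> n \<and> (i, j) \<noteq> (0, n)}"

definition is_pPath :: "nat \<Rightarrow> nat \<Rightarrow> nat list \<Rightarrow> bool" where
  "is_pPath n p vs \<longleftrightarrow> length vs = p + 1 \<and> distinct vs \<and> hd vs = 0 \<and> last vs = n \<and>
     set (zip vs (tl vs)) \<subseteq> arcs n"

definition path_arcs :: "nat list \<Rightarrow> (nat \<times> nat) set" where
  "path_arcs vs = set (zip vs (tl vs))"

definition incidence :: "(nat \<times> nat) set \<Rightarrow> (nat \<times> nat) \<Rightarrow> real" where
  "incidence F = (\<lambda>a. if a \<in> F then 1 else 0)"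

definition pPathPolytope :: "nat \<Rightarrow> nat \<Rightarrow> ((nat \<times> nat) \<Rightarrow> real) set" where
  "pPathPolytope n p = convex hull {incidence (path_arcs vs) | vs. is_pPath n p vs}"

definition xsum :: "(nat \<times> nat) set \<Rightarrow> ((nat \<times> nat) \<Rightarrow> real) \<Rightarrow> real" where
  "xsum F x = (\<Sum>a\<in>F. x a)"

definition cut :: "nat \<Rightarrow> nat set \<Rightarrow> nat set \<Rightarrow> (nat \<times> nat) set" where
  "cut n S T = {(i, j) \<in> arcs n. i \<in> S \<and> j \<in> T}"

definition valid_ineq :: "((nat \<times> nat) \<Rightarrow> real) set \<Rightarrow> (nat \<times> nat) set \<Rightarrow> real \<Rightarrow> bool" where
  "valid_ineq P F b \<longleftrightarrow> (\<forall>x\<in>P. xsum F x \<ge> b)"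

definition facet_defining :: "((nat \<times> nat) \<Rightarrow> real) set \<Rightarrow> (nat \<times> nat) set \<Rightarrow> real \<Rightarrow> bool" where
  "facet_defining P F b \<longleftrightarrow> valid_ineq P F b \<and>
     affdim (P \<inter> {x. xsum F x = b}) = affdim P - 1"

end

theory Submission
  imports Defs
begin


lemma affdim_eq:
  fixes Y :: "'a::real_vector set"
  assumes aY: "a \<in> Y" and fB: "finite B" and iB: "independent B"
    and BY: "(\<lambda>b. a + b) ` B \<subseteq> Y" and sp: "\<forall>y\<in>Y. y - a \<in> span B"
  shows "affdim Y = int (card B)"
proof -
  let ?P = "\<lambda>k. \<exists>T. T \<subseteq> Y \<and> finite T \<and> \<not> affine_dependent T \<and> card T = k"
  have "(GREATEST k. ?P k) = card B + 1"
  proof (rule Greatest_equality)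
    have B0: "0 \<notin> B" using iB real_vector.dependent_zero by blast
    have anB: "a \<notin> (\<lambda>b. a + b) ` B" using B0 by auto
    have img: "(\<lambda>x. -a + x) ` ((\<lambda>b. a + b) ` B) = B"
      by (auto simp: image_image)
    have "\<not> affine_dependent (insert a ((\<lambda>b. a + b) ` B))"
      using affine_dependent_iff_dependent[OF anB] img iB by simp
    moreover have "card (insert a ((\<lambda>b. a + b) ` B)) = card B + 1"
      using anB fB by (simp add: card_image inj_on_def)
    ultimately show "?P (card B + 1)"
      using aY BY fB by (intro exI[of _ "insert a ((\<lambda>b. a + b) ` B)"]) auto
  next
    fix k assume "?P k"
    then obtain T where T: "T \<subseteq> Y" "finite T" "\<not> affine_dependent T" "card T = k" by blast
    show "k \<le> card B + 1"
    proof (cases "T = {}")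
      case True then show ?thesis using T by simp
    next
      case False
      then obtain t where t: "t \<in> T" by blast
      have tn: "t \<notin> T - {t}" by simp
      have Teq: "T = insert t (T - {t})" using t by blast
      have ind: "independent ((\<lambda>x. -t + x) ` (T - {t}))"
        using affine_dependent_iff_dependent[OF tn] T(3) Teq by metis
      have sub: "(\<lambda>x. -t + x) ` (T - {t}) \<subseteq> span B"
      proof
        fix v assume "v \<in> (\<lambda>x. -t + x) ` (T - {t})"
        then obtain x where x: "x \<in> T" "v = -t + x" by blast
        have "x - a \<in> span B" "t - a \<in> span B" using sp T(1) x t by auto
        then have "(x - a) - (t - a) \<in> span B" by (rule real_vector.span_diff)
        moreover have "v = (x - a) - (t - a)" using x(2) by (simp add: algebra_simps)
        ultimately show "v \<in> span B" by simp
      qed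
      have "card ((\<lambda>x. -t + x) ` (T - {t})) \<le> card B"
        using real_vector.independent_span_bound[OF fB ind sub] by simp
      moreover have "card ((\<lambda>x. -t + x) ` (T - {t})) = card (T - {t})"
        by (simp add: card_image inj_on_def)
      moreover have "card T = card (T - {t}) + 1"
        using T(2) t by (metis Teq card_insert_disjoint finite_Diff tn Suc_eq_plus1)
      ultimately show ?thesis using T by simp
    qed
  qed
  then show ?thesis unfolding affdim_def by simp
qed

lemma facet_from_span:
  fixes X :: "'a::real_vector set" and l :: "'a \<Rightarrow> real"
  assumes fX: "finite X" and lin: "linear l" and aX: "a \<in> X" and la: "l a = 1"
    and x1X: "x1 \<in> X" and lx1: "l x1 \<noteq> 1"
    and spn: "\<forall>z\<in>X. z - a \<in> span (insert (x1 - a) ((\<lambda>y. y - a) ` {y\<in>X. l y = 1}))"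
  shows "affdim (convex hull X \<inter> {x. l x = 1}) = affdim (convex hull X) - 1"
proof -
  define V0 where "V0 = (\<lambda>y. y - a) ` {y\<in>X. l y = 1}"
  obtain B where B: "B \<subseteq> V0" "independent B" "V0 \<subseteq> span B"
    using real_vector.maximal_independent_subset by blast
  have "finite V0" unfolding V0_def using fX by simp
  then have fB: "finite B" using B(1) finite_subset by blast
  have lB: "\<forall>v\<in>B. l v = 0"
  proof
    fix v assume "v \<in> B"
    then obtain y where "y \<in> X" "l y = 1" "v = y - a" using B(1) unfolding V0_def by blast
    then show "l v = 0" using lin la by (simp add: linear_diff)
  qed
  have lspan: "\<And>v. v \<in> span B \<Longrightarrow> l v = 0"
    using real_vector.linear_eq_0_on_span[OF lin] lB by blast
  have x1n: "x1 - a \<notin> span B"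
  proof
    assume "x1 - a \<in> span B"
    then have "l (x1 - a) = 0" by (rule lspan)
    then show False using lin la lx1 by (simp add: linear_diff)
  qed
  have x1nB: "x1 - a \<notin> B" using x1n real_vector.span_base by blast
  define B' where "B' = insert (x1 - a) B"
  have iB': "independent B'" unfolding B'_def using B(2) x1n real_vector.independent_insertI by blast
  have fB': "finite B'" using fB B'_def by simp
  have cB': "card B' = card B + 1" using fB x1nB B'_def by simp
  have spanXB': "\<forall>z\<in>X. z - a \<in> span B'"
  proof
    fix z assume "z \<in> X"
    then have "z - a \<in> span (insert (x1 - a) V0)" using spn V0_def by simp
    moreover have "span (insert (x1 - a) V0) \<subseteq> span B'"
    proof -
      have "insert (x1 - a) V0 \<subseteq> span B'"
        using B(3) real_vector.span_mono[of B B'] real_vector.span_base[of "x1 - a" B'] B'_def by auto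
      then show ?thesis using real_vector.span_minimal real_vector.subspace_span by blast
    qed
    ultimately show "z - a \<in> span B'" by blast
  qed
  have cvx: "convex {y. y - a \<in> span B'}"
  proof (rule convexI)
    fix x y :: 'a and u v :: real
    assume xy0: "x \<in> {y. y - a \<in> span B'}" "y \<in> {y. y - a \<in> span B'}" and uv: "0 \<le> u" "0 \<le> v" "u + v = 1"
    from xy0 have xy: "x - a \<in> span B'" "y - a \<in> span B'" by (simp_all only: mem_Collect_eq)
    have "u *\<^sub>R (x - a) + v *\<^sub>R (y - a) = u *\<^sub>R x + v *\<^sub>R y - (u + v) *\<^sub>R a"
      by (simp add: scaleR_diff_right scaleR_add_left)
    then have "u *\<^sub>R x + v *\<^sub>R y - a = u *\<^sub>R (x - a) + v *\<^sub>R (y - a)"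
      using uv(3) by simp
    also have "\<dots> \<in> span B'"
      using xy by (intro real_vector.span_add real_vector.span_scale)
    finally show "u *\<^sub>R x + v *\<^sub>R y \<in> {y. y - a \<in> span B'}" by (simp only: mem_Collect_eq)
  qed
  have hullsub: "convex hull X \<subseteq> {y. y - a \<in> span B'}"
    using hull_minimal[of X "{y. y - a \<in> span B'}" convex] spanXB' cvx by blast
  have aP: "a \<in> convex hull X" by (rule hull_inc[OF aX])
  have XP: "X \<subseteq> convex hull X" by (rule hull_subset)
  have dP: "affdim (convex hull X) = int (card B')"
  proof (rule affdim_eq[OF aP fB' iB'])
    show "(\<lambda>b. a + b) ` B' \<subseteq> convex hull X"
    proof
      fix w assume "w \<in> (\<lambda>b. a + b) ` B'"
      then obtain b where b: "b \<in> B'" "w = a + b" by blast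
      show "w \<in> convex hull X"
      proof (cases "b = x1 - a")
        case True
        then have "w = x1" using b by simp
        then show ?thesis using x1X XP by blast
      next
        case False
        then have "b \<in> V0" using b B(1) B'_def by blast
        then obtain y where y: "y \<in> X" "b = y - a" unfolding V0_def by blast
        then have "w = y" using b by simp
        then show ?thesis using y XP by blast
      qed
    qed
    show "\<forall>y\<in>convex hull X. y - a \<in> span B'" using hullsub by blast
  qed
  have dF: "affdim (convex hull X \<inter> {x. l x = 1}) = int (card B)"
  proof (rule affdim_eq[OF _ fB B(2)])
    show "a \<in> convex hull X \<inter> {x. l x = 1}" using aP la by simp
    show "(\<lambda>b. a + b) ` B \<subseteq> convex hull X \<inter> {x. l x = 1}"
    proof
      fix w assume "w \<in> (\<lambda>b. a + b) ` B"
      then obtain b where b: "b \<in> B" "w = a + b" by blast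
      then have "b \<in> V0" using B(1) by blast
      then obtain y where y: "y \<in> X" "l y = 1" "b = y - a" unfolding V0_def by blast
      then have "w = y" using b by simp
      then show "w \<in> convex hull X \<inter> {x. l x = 1}" using y XP by blast
    qed
    show "\<forall>y\<in>convex hull X \<inter> {x. l x = 1}. y - a \<in> span B"
    proof
      fix y assume y: "y \<in> convex hull X \<inter> {x. l x = 1}"
      then have "y - a \<in> span B'" using hullsub by blast
      then obtain k where k: "(y - a) - k *\<^sub>R (x1 - a) \<in> span B"
        unfolding B'_def using real_vector.span_breakdown_eq by blast
      have "l ((y - a) - k *\<^sub>R (x1 - a)) = 0" using lspan k by blast
      then have "l y - l a - k * (l x1 - l a) = 0" using lin
        by (simp add: linear_diff linear_scale)
      then have "k * (l x1 - 1) = 0" using y la by simp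
      then have "k = 0" using lx1 by simp
      then show "y - a \<in> span B" using k by (metis diff_zero scaleR_zero_left)
    qed
  qed
  show ?thesis using dP dF cB' by simp
qed


definition lsum :: "(nat \<times> nat \<Rightarrow> real) \<Rightarrow> nat list \<Rightarrow> real" where
  "lsum f vs = sum_list (map f (zip vs (tl vs)))"

lemma lsum_Nil[simp]: "lsum f [] = 0" by (simp add: lsum_def)
lemma lsum_single[simp]: "lsum f [a] = 0" by (simp add: lsum_def)
lemma lsum_Cons2[simp]: "lsum f (a # b # vs) = f (a, b) + lsum f (b # vs)" by (simp add: lsum_def)

lemma lsum_append:
  "xs \<noteq> [] \<Longrightarrow> ys \<noteq> [] \<Longrightarrow> lsum f (xs @ ys) = lsum f xs + f (last xs, hd ys) + lsum f ys"
proof (induction xs rule: induct_list012)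
  case 1 then show ?case by simp
next
  case (2 a) then show ?case by (cases ys) auto
next
  case (3 a b zs) then show ?case by simp
qed

lemma lsum_lin: "lsum (\<lambda>a. f a - c * g a) vs = lsum f vs - c * lsum g vs"
  by (simp add: lsum_def sum_list_subtractf sum_list_const_mult)

lemma lsum_nonneg: "(\<And>a. f a \<ge> 0) \<Longrightarrow> lsum f vs \<ge> 0"
  unfolding lsum_def by (rule sum_list_nonneg) auto

lemma lsum_tele:
  "(\<forall>(i,j)\<in>set (zip vs (tl vs)). h (i,j) = pt j - pt i + beta) \<Longrightarrow> vs \<noteq> [] \<Longrightarrow>
   lsum h vs = pt (last vs) - pt (hd vs) + real (length vs - 1) * beta"
proof (induction vs rule: induct_list012)
  case 1 then show ?case by simp
next
  case (2 a) then show ?case by simp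
next
  case (3 a b zs)
  then have "lsum h (b # zs) = pt (last (b # zs)) - pt b + real (length zs) * beta" by simp
  moreover have "h (a, b) = pt b - pt a + beta" using 3(3) by simp
  ultimately show ?case by (simp add: algebra_simps)
qed

lemma lsum_set:
  assumes "distinct vs"
  shows "sum f (path_arcs vs) = lsum f vs"
proof -
  have "distinct (zip vs (tl vs))" using assms by (rule distinct_zipI1)
  then show ?thesis unfolding path_arcs_def lsum_def
    by (simp add: sum_list_distinct_conv_sum_set)
qed

definition ci :: "nat set \<Rightarrow> nat \<times> nat \<Rightarrow> real" where
  "ci S a = (if fst a \<in> S \<and> snd a \<notin> S then 1 else 0)"

lemma ci_simp[simp]: "ci S (a, b) = (if a \<in> S \<and> b \<notin> S then 1 else 0)" by (simp add: ci_def)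

lemma ci_nonneg: "ci S a \<ge> 0" by (simp add: ci_def)

lemma lsum_ci_allS: "\<forall>x\<in>set xs. x \<in> S \<Longrightarrow> lsum (ci S) xs = 0"
  by (induction xs rule: induct_list012) auto

lemma lsum_ci_allT: "\<forall>x\<in>set xs. x \<notin> S \<Longrightarrow> lsum (ci S) xs = 0"
  by (induction xs rule: induct_list012) auto

lemma ci_blocks3:
  assumes "A \<noteq> []" "B \<noteq> []" "C \<noteq> []" "\<forall>x\<in>set A. x \<in> S" "\<forall>x\<in>set B. x \<notin> S" "\<forall>x\<in>set C. x \<in> S"
  shows "lsum (ci S) (A @ B @ C) = 1"
proof -
  have "lsum (ci S) (A @ B @ C) = lsum (ci S) A + ci S (last A, hd (B @ C)) + lsum (ci S) (B @ C)"
    using assms by (simp add: lsum_append)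
  also have "lsum (ci S) (B @ C) = lsum (ci S) B + ci S (last B, hd C) + lsum (ci S) C"
    using assms by (simp add: lsum_append)
  finally show ?thesis using assms
    by (simp add: lsum_ci_allS lsum_ci_allT)
qed

lemma ci_blocks5:
  assumes "A \<noteq> []" "B \<noteq> []" "C \<noteq> []" "D \<noteq> []" "E \<noteq> []"
    "\<forall>x\<in>set A. x \<in> S" "\<forall>x\<in>set B. x \<notin> S" "\<forall>x\<in>set C. x \<in> S" "\<forall>x\<in>set D. x \<notin> S" "\<forall>x\<in>set E. x \<in> S"
  shows "lsum (ci S) (A @ B @ C @ D @ E) = 2"
proof -
  have 1: "lsum (ci S) (A @ B @ C @ D @ E) = lsum (ci S) A + ci S (last A, hd (B @ C @ D @ E)) + lsum (ci S) (B @ C @ D @ E)"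
    using assms by (simp add: lsum_append)
  have 2: "lsum (ci S) (B @ C @ D @ E) = lsum (ci S) B + ci S (last B, hd (C @ D @ E)) + lsum (ci S) (C @ D @ E)"
    using assms by (simp add: lsum_append)
  have 3: "lsum (ci S) (C @ D @ E) = lsum (ci S) C + ci S (last C, hd (D @ E)) + lsum (ci S) (D @ E)"
    using assms by (simp add: lsum_append)
  have 4: "lsum (ci S) (D @ E) = lsum (ci S) D + ci S (last D, hd E) + lsum (ci S) E"
    using assms by (simp add: lsum_append)
  show ?thesis using assms unfolding 1 2 3 4
    by (simp add: lsum_ci_allS lsum_ci_allT)
qed

lemma ci_pos: "hd xs \<in> S \<Longrightarrow> x \<in> set xs \<Longrightarrow> x \<notin> S \<Longrightarrow> lsum (ci S) xs \<ge> 1"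
proof (induction xs rule: induct_list012)
  case 1 then show ?case by simp
next
  case (2 a) then show ?case by simp
next
  case (3 a b zs)
  show ?case
  proof (cases "b \<in> S")
    case True
    then have "lsum (ci S) (b # zs) \<ge> 1" using 3 by auto
    then show ?thesis by simp
  next
    case False
    have "lsum (ci S) (b # zs) \<ge> 0" by (rule lsum_nonneg) (rule ci_nonneg)
    then show ?thesis using False 3(3) by simp
  qed
qed


lemma zip_tl_nth:
  assumes "(a, b) \<in> set (zip vs (tl vs))"
  shows "\<exists>i. Suc i < length vs \<and> a = vs ! i \<and> b = vs ! Suc i"
proof -
  from assms obtain i where i: "i < min (length vs) (length (tl vs))" "(a, b) = (vs ! i, tl vs ! i)"
    by (auto simp: set_zip)
  then show ?thesis by (intro exI[of _ i]) (auto simp: nth_tl)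
qed

lemma zip_tl_arcs:
  assumes d: "distinct vs" and s: "set vs \<subseteq> {0..n}" and h: "hd vs = 0" and l: "last vs = n"
    and len: "length vs \<ge> 3"
  shows "set (zip vs (tl vs)) \<subseteq> arcs n"
proof
  fix e assume "e \<in> set (zip vs (tl vs))"
  moreover obtain a b where "e = (a, b)" by (cases e)
  ultimately have e: "e = (a, b)" "(a, b) \<in> set (zip vs (tl vs))" by simp_all
  from zip_tl_nth[OF e(2)] obtain i where i: "Suc i < length vs" "a = vs ! i" "b = vs ! Suc i" by blast
  have ne: "vs \<noteq> []" using len by (cases vs) simp_all
  have h0: "vs ! 0 = 0" using hd_conv_nth[OF ne] h by argo
  have ln: "vs ! (length vs - 1) = n" using last_conv_nth[OF ne] l by argo
  have ab: "a \<noteq> b" using i nth_eq_iff_index_eq[OF d, of i "Suc i"] by auto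
  have b0: "b \<noteq> 0"
  proof
    assume "b = 0"
    then have "vs ! Suc i = vs ! 0" using i h0 by simp
    moreover have "vs ! Suc i = vs ! 0 \<longleftrightarrow> Suc i = 0"
      by (rule nth_eq_iff_index_eq[OF d]) (use i(1) in auto)
    ultimately have "Suc i = 0" by simp
    then show False by simp
  qed
  have an: "a \<noteq> n"
  proof
    assume "a = n"
    then have "vs ! i = vs ! (length vs - 1)" using i ln by simp
    moreover have "length vs - 1 < length vs" "i < length vs" using i(1) by auto
    ultimately have "i = length vs - 1" using nth_eq_iff_index_eq[OF d, of i "length vs - 1"] by simp
    then show False using i(1) by simp
  qed
  have a0n: "(a, b) \<noteq> (0, n)"
  proof
    assume "(a, b) = (0, n)"
    then have "a = vs ! 0" "b = vs ! (length vs - 1)" using h0 ln by auto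
    then have "vs ! i = vs ! 0" "vs ! Suc i = vs ! (length vs - 1)" using i by auto
    then have "i = 0" "Suc i = length vs - 1"
      using nth_eq_iff_index_eq[OF d, of i 0] nth_eq_iff_index_eq[OF d, of "Suc i" "length vs - 1"] i(1) len ne
      by auto
    then show False using len by simp
  qed
  have m1: "vs ! i \<in> set vs" "vs ! Suc i \<in> set vs" using i(1) by auto
  have "vs ! i \<in> {0..n}" "vs ! Suc i \<in> {0..n}" using s m1 by (meson subsetD)+
  then have "a \<le> n" "b \<le> n" using i by simp_all
  then show "e \<in> arcs n" using e ab b0 an a0n by (auto simp: arcs_def)
qed


lemma mk_path:
  assumes d: "distinct ws" and s: "set ws \<subseteq> {0<..<n}" and l: "length ws = p - 1" and p: "3 \<le> p"
  shows "is_pPath n p (0 # ws @ [n])"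
proof -
  have "ws \<noteq> []" using l p by auto
  then have n0: "0 < n" using s by (cases ws) auto
  have d2: "distinct (0 # ws @ [n])" using d s n0 by auto
  have s2: "set (0 # ws @ [n]) \<subseteq> {0..n}" using s by auto
  have "set (zip (0 # ws @ [n]) (tl (0 # ws @ [n]))) \<subseteq> arcs n"
    by (rule zip_tl_arcs[OF d2 s2]) (use l p in auto)
  then show ?thesis unfolding is_pPath_def using d2 l p by simp
qed

lemma path_set:
  assumes "is_pPath n p vs"
  shows "set vs \<subseteq> {0..n}"
proof
  fix x assume x: "x \<in> set vs"
  then obtain i where i: "i < length vs" "x = vs ! i" by (auto simp: in_set_conv_nth)
  show "x \<in> {0..n}"
  proof (cases "Suc i < length vs")
    case True
    then have "(vs ! i, vs ! Suc i) \<in> set (zip vs (tl vs))"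
      by (auto simp: set_zip nth_tl intro!: exI[of _ i])
    then have "(vs ! i, vs ! Suc i) \<in> arcs n" using assms unfolding is_pPath_def by blast
    then show ?thesis using i by (simp add: arcs_def)
  next
    case False
    then have "i = length vs - 1" using i by simp
    moreover have "vs \<noteq> []" using i by auto
    ultimately have "x = last vs" using i by (simp add: last_conv_nth)
    then show ?thesis using assms unfolding is_pPath_def by simp
  qed
qed

lemma path_decomp:
  assumes "is_pPath n p vs" "1 \<le> p"
  shows "\<exists>ws. vs = 0 # ws @ [n] \<and> distinct ws \<and> set ws \<subseteq> {0<..<n} \<and> length ws = p - 1"
proof -
  have L: "length vs = p + 1" and d: "distinct vs" and h: "hd vs = 0" and l: "last vs = n"
    using assms unfolding is_pPath_def by auto
  obtain a rest where vs: "vs = a # rest" using L by (cases vs) auto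
  have a: "a = 0" using h vs by simp
  have rest: "rest \<noteq> []" using L vs assms(2) by auto
  define ws where "ws = butlast rest"
  have "last rest = n" using l vs rest by simp
  then have rest2: "rest = ws @ [n]" using append_butlast_last_id[OF rest] unfolding ws_def by simp
  have vs2: "vs = 0 # ws @ [n]" using vs a rest2 by simp
  have dws: "distinct ws" using d vs2 by simp
  have sub: "set vs \<subseteq> {0..n}" using path_set[OF assms(1)] .
  have "set ws \<subseteq> {0<..<n}"
  proof
    fix x assume x: "x \<in> set ws"
    have nn: "0 \<notin> set ws" "n \<notin> set ws" using d vs2 by auto
    have "x \<noteq> 0" "x \<noteq> n" using nn x by metis+
    moreover have "x \<le> n" using sub x vs2 by auto
    ultimately show "x \<in> {0<..<n}" by auto
  qed
  moreover have "length ws = p - 1" using L vs2 by simp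
  ultimately show ?thesis using vs2 dws by blast
qed


locale pp =
  fixes n p :: nat and S :: "nat set"
  assumes p4: "4 \<le> p" and pn: "p \<le> n - 1" and Ssub: "S \<subseteq> {0..n}" and S0: "0 \<in> S" and Sn: "n \<in> S"
begin

definition Tn where "Tn = {v. 0 < v \<and> v < n \<and> v \<notin> S}"
definition Sm where "Sm = {v. 0 < v \<and> v < n \<and> v \<in> S}"
definition cp1 where "cp1 vs \<longleftrightarrow> is_pPath n p vs \<and> lsum (ci S) vs = 1"

lemma Tn_iff: "v \<in> Tn \<longleftrightarrow> 0 < v \<and> v < n \<and> v \<notin> S" by (simp add: Tn_def)
lemma Sm_iff: "v \<in> Sm \<longleftrightarrow> 0 < v \<and> v < n \<and> v \<in> S" by (simp add: Sm_def)

lemma TnSm: "Tn \<inter> Sm = {}" by (auto simp: Tn_def Sm_def)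

lemma n5: "5 \<le> n" using p4 pn by simp

lemma fill:
  assumes fE: "finite E" and cE: "card E \<le> k" and kr: "k + r \<le> n - 1"
  shows "\<exists>\<tau> \<sigma>. distinct \<tau> \<and> set \<tau> \<subseteq> Tn - E \<and> distinct \<sigma> \<and> set \<sigma> \<subseteq> Sm - E \<and> length \<tau> + length \<sigma> = r"
proof -
  have fA: "finite (Tn - E)" by (rule finite_subset[of _ "{..<n}"]) (auto simp: Tn_def)
  have fB: "finite (Sm - E)" by (rule finite_subset[of _ "{..<n}"]) (auto simp: Sm_def)
  have un: "(Tn - E) \<union> (Sm - E) = {0<..<n} - E" by (auto simp: Tn_def Sm_def)
  have dj: "(Tn - E) \<inter> (Sm - E) = {}" by (auto simp: Tn_def Sm_def)
  have "card {0<..<n} - card E \<le> card ({0<..<n} - E)" by (rule diff_card_le_card_Diff[OF fE])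
  moreover have "card {0<..<n} = n - 1" by simp
  moreover have "card ((Tn - E) \<union> (Sm - E)) = card (Tn - E) + card (Sm - E)"
    by (rule card_Un_disjoint[OF fA fB dj])
  ultimately have "card (Tn - E) + card (Sm - E) = card ({0<..<n} - E)" using un by simp
  moreover have "card ({0<..<n} - E) \<ge> n - 1 - card E"
    using diff_card_le_card_Diff[OF fE, of "{0<..<n}"] by simp
  ultimately have cAB: "card (Tn - E) + card (Sm - E) \<ge> r" using cE kr by linarith
  define LT where "LT = sorted_list_of_set (Tn - E)"
  define LS where "LS = sorted_list_of_set (Sm - E)"
  have LT: "distinct LT" "set LT = Tn - E" "length LT = card (Tn - E)" using fA by (auto simp: LT_def)
  have LS: "distinct LS" "set LS = Sm - E" "length LS = card (Sm - E)" using fB by (auto simp: LS_def)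
  define t where "t = take r LT"
  define s where "s = take (r - length t) LS"
  have "length t + length s = r" using cAB LT(3) LS(3) by (simp add: t_def s_def)
  moreover have "distinct t" "distinct s" using LT(1) LS(1) by (simp_all add: t_def s_def)
  moreover have "set t \<subseteq> Tn - E" using LT(2) set_take_subset unfolding t_def by metis
  moreover have "set s \<subseteq> Sm - E" using LS(2) set_take_subset unfolding s_def by metis
  ultimately show ?thesis by blast
qed

lemma card3: "card {x, y, w::nat} \<le> 3"
  by (simp add: card_insert_if)

lemma distinct_le1: "length U \<le> 1 \<Longrightarrow> distinct U"
  by (cases U) auto

end

locale pp1 = pp +
  fixes h :: "nat \<times> nat \<Rightarrow> real" and K :: real
  assumes Hh: "\<And>vs. cp1 vs \<Longrightarrow> lsum h vs = K"
begin

lemma swap: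
  assumes ne: "pre \<noteq> []" "post \<noteq> []" "m1 \<noteq> []" "m2 \<noteq> []"
    and c: "cp1 (pre @ m1 @ post)" "cp1 (pre @ m2 @ post)"
  shows "h (last pre, hd m1) + lsum h m1 + h (last m1, hd post) =
         h (last pre, hd m2) + lsum h m2 + h (last m2, hd post)"
proof -
  have a: "lsum h (pre @ m1 @ post) = lsum h pre + h (last pre, hd m1) + (lsum h m1 + h (last m1, hd post) + lsum h post)"
    using ne by (simp add: lsum_append)
  have b: "lsum h (pre @ m2 @ post) = lsum h pre + h (last pre, hd m2) + (lsum h m2 + h (last m2, hd post) + lsum h post)"
    using ne by (simp add: lsum_append)
  show ?thesis using a b Hh[OF c(1)] Hh[OF c(2)] by linarith
qed

lemma T_ST:
  assumes U: "set U \<subseteq> Sm" "length U \<le> 1" and w: "w \<in> Tn"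
    and x: "0 < x" "x < n" and y: "0 < y" "y < n" and xy: "x \<noteq> y"
    and xU: "x \<notin> set U" and yU: "y \<notin> set U" and xw: "x \<noteq> w" and yw: "y \<noteq> w"
  shows "h (last (0 # U), x) + h (x, w) = h (last (0 # U), y) + h (y, w)"
proof -
  define E where "E = set U \<union> {x, y, w}"
  have fE: "finite E" by (simp add: E_def)
  have "card E \<le> card (set U) + card {x, y, w}" unfolding E_def by (rule card_Un_le)
  then have cE: "card E \<le> length U + 3" using card_length[of U] card3[of x y w] by linarith
  have kr: "length U + 3 + (p - 3 - length U) \<le> n - 1" using p4 pn U(2) by simp
  obtain t s where ts: "distinct t" "set t \<subseteq> Tn - E" "distinct s" "set s \<subseteq> Sm - E"
      "length t + length s = p - 3 - length U"
    using fill[OF fE cE kr] by blast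
  have P: "cp1 (0 # U @ v # w # t @ s @ [n])" if v: "v = x \<or> v = y" for v
  proof -
    have v1: "0 < v" "v < n" "v \<notin> set U" "v \<noteq> w" "v \<in> E" using v x y xU yU xw yw by (auto simp: E_def)
    have dU: "distinct U" using U(2) by (rule distinct_le1)
    have wU: "w \<notin> set U" using w U(1) by (auto simp: Tn_iff Sm_iff)
    have tE: "set t \<inter> E = {}" "set s \<inter> E = {}" using ts(2,4) by auto
    have ts': "set t \<inter> set s = {}" using ts(2,4) TnSm by blast
    have UE: "set U \<subseteq> E" "w \<in> E" by (auto simp: E_def)
    have d: "distinct (U @ v # w # t @ s)"
      using dU v1 wU tE ts' UE ts(1,3) by auto
    have sI: "set (U @ v # w # t @ s) \<subseteq> {0<..<n}"
      using U(1) w v1 ts(2,4) by (auto simp: Tn_iff Sm_iff)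
    have l: "length (U @ v # w # t @ s) = p - 1" using ts(5) U(2) p4 by simp
    have pth: "is_pPath n p (0 # (U @ v # w # t @ s) @ [n])"
      by (rule mk_path[OF d sI l]) (use p4 in simp)
    have ci: "lsum (ci S) (0 # U @ v # w # t @ s @ [n]) = 1"
    proof (cases "v \<in> S")
      case True
      have "lsum (ci S) ((0 # U @ [v]) @ (w # t) @ (s @ [n])) = 1"
        by (rule ci_blocks3) (use True S0 Sn U(1) w ts(2,4) in \<open>auto simp: Tn_iff Sm_iff\<close>)
      then show ?thesis by simp
    next
      case False
      have "lsum (ci S) ((0 # U) @ (v # w # t) @ (s @ [n])) = 1"
        by (rule ci_blocks3) (use False S0 Sn U(1) w ts(2,4) in \<open>auto simp: Tn_iff Sm_iff\<close>)
      then show ?thesis by simp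
    qed
    show ?thesis using pth ci by (simp add: cp1_def)
  qed
  have "h (last (0 # U), hd [x]) + lsum h [x] + h (last [x], hd (w # t @ s @ [n])) =
        h (last (0 # U), hd [y]) + lsum h [y] + h (last [y], hd (w # t @ s @ [n]))"
    by (rule swap) (use P[of x] P[of y] in simp_all)
  then show ?thesis by simp
qed


lemma T_TS:
  assumes W: "set W \<subseteq> Sm" "length W \<le> 1" and u: "u \<in> Tn"
    and x: "0 < x" "x < n" and y: "0 < y" "y < n" and xy: "x \<noteq> y"
    and xW: "x \<notin> set W" and yW: "y \<notin> set W" and xu: "x \<noteq> u" and yu: "y \<noteq> u"
  shows "h (u, x) + h (x, hd (W @ [n])) = h (u, y) + h (y, hd (W @ [n]))"
proof -
  define E where "E = set W \<union> {x, y, u}"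
  have fE: "finite E" by (simp add: E_def)
  have "card E \<le> card (set W) + card {x, y, u}" unfolding E_def by (rule card_Un_le)
  then have cE: "card E \<le> length W + 3" using card_length[of W] card3[of x y u] by linarith
  have kr: "length W + 3 + (p - 3 - length W) \<le> n - 1" using p4 pn W(2) by simp
  obtain t s where ts: "distinct t" "set t \<subseteq> Tn - E" "distinct s" "set s \<subseteq> Sm - E"
      "length t + length s = p - 3 - length W"
    using fill[OF fE cE kr] by blast
  have P: "cp1 (0 # s @ t @ u # v # W @ [n])" if v: "v = x \<or> v = y" for v
  proof -
    have v1: "0 < v" "v < n" "v \<notin> set W" "v \<noteq> u" "v \<in> E" using v x y xW yW xu yu by (auto simp: E_def)
    have dW: "distinct W" using W(2) by (rule distinct_le1)
    have uW: "u \<notin> set W" using u W(1) by (auto simp: Tn_iff Sm_iff)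
    have tE: "set t \<inter> E = {}" "set s \<inter> E = {}" using ts(2,4) by auto
    have ts': "set t \<inter> set s = {}" using ts(2,4) TnSm by blast
    have WE: "set W \<subseteq> E" "u \<in> E" by (auto simp: E_def)
    have d: "distinct (s @ t @ u # v # W)"
      using dW v1 uW tE ts' WE ts(1,3) by auto
    have sI: "set (s @ t @ u # v # W) \<subseteq> {0<..<n}"
      using W(1) u v1 ts(2,4) by (auto simp: Tn_iff Sm_iff)
    have l: "length (s @ t @ u # v # W) = p - 1" using ts(5) W(2) p4 by simp
    have pth: "is_pPath n p (0 # (s @ t @ u # v # W) @ [n])"
      by (rule mk_path[OF d sI l]) (use p4 in simp)
    have ci: "lsum (ci S) (0 # s @ t @ u # v # W @ [n]) = 1"
    proof (cases "v \<in> S")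
      case True
      have "lsum (ci S) ((0 # s) @ (t @ [u]) @ (v # W @ [n])) = 1"
        by (rule ci_blocks3) (use True S0 Sn W(1) u ts(2,4) in \<open>auto simp: Tn_iff Sm_iff\<close>)
      then show ?thesis by simp
    next
      case False
      have "lsum (ci S) ((0 # s) @ (t @ [u, v]) @ (W @ [n])) = 1"
        by (rule ci_blocks3) (use False S0 Sn W(1) u ts(2,4) in \<open>auto simp: Tn_iff Sm_iff\<close>)
      then show ?thesis by simp
    qed
    show ?thesis using pth ci by (simp add: cp1_def)
  qed
  have "h (last (0 # s @ t @ [u]), hd [x]) + lsum h [x] + h (last [x], hd (W @ [n])) =
        h (last (0 # s @ t @ [u]), hd [y]) + lsum h [y] + h (last [y], hd (W @ [n]))"
    by (rule swap) (use P[of x] P[of y] in simp_all)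
  then show ?thesis by simp
qed

lemma T2R:
  assumes x: "0 < x" "x < n" and y: "0 < y" "y < n" and xy: "x \<noteq> y" and ty: "x \<in> S \<longleftrightarrow> y \<in> S"
    and z: "z \<in> Tn" "z \<noteq> x" "z \<noteq> y"
  shows "h (0, x) + h (x, y) + h (y, z) = h (0, y) + h (y, x) + h (x, z)"
proof -
  define E where "E = {x, y, z}"
  have fE: "finite E" by (simp add: E_def)
  have cE: "card E \<le> 3" unfolding E_def by (rule card3)
  have kr: "3 + (p - 4) \<le> n - 1" using p4 pn by simp
  obtain t s where ts: "distinct t" "set t \<subseteq> Tn - E" "distinct s" "set s \<subseteq> Sm - E"
      "length t + length s = p - 4"
    using fill[OF fE cE kr] by blast
  have P: "cp1 (0 # a # b # z # t @ s @ [n])" if ab: "(a = x \<and> b = y) \<or> (a = y \<and> b = x)" for a b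
  proof -
    have ab1: "0 < a" "a < n" "0 < b" "b < n" "a \<noteq> b" "a \<in> E" "b \<in> E" "a \<noteq> z" "b \<noteq> z" "a \<in> S \<longleftrightarrow> b \<in> S"
      using ab x y xy z ty by (auto simp: E_def)
    have tE: "set t \<inter> E = {}" "set s \<inter> E = {}" using ts(2,4) by auto
    have ts': "set t \<inter> set s = {}" using ts(2,4) TnSm by blast
    have zE: "z \<in> E" by (simp add: E_def)
    have d: "distinct (a # b # z # t @ s)"
      using ab1 tE ts' zE ts(1,3) by auto
    have sI: "set (a # b # z # t @ s) \<subseteq> {0<..<n}"
      using z ab1 ts(2,4) by (auto simp: Tn_iff Sm_iff)
    have l: "length (a # b # z # t @ s) = p - 1" using ts(5) p4 by simp
    have pth: "is_pPath n p (0 # (a # b # z # t @ s) @ [n])"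
      by (rule mk_path[OF d sI l]) (use p4 in simp)
    have ci: "lsum (ci S) (0 # a # b # z # t @ s @ [n]) = 1"
    proof (cases "a \<in> S")
      case True
      have "lsum (ci S) ([0, a, b] @ (z # t) @ (s @ [n])) = 1"
        by (rule ci_blocks3) (use True ab1 S0 Sn z ts(2,4) in \<open>auto simp: Tn_iff Sm_iff\<close>)
      then show ?thesis by simp
    next
      case False
      have "lsum (ci S) ([0] @ (a # b # z # t) @ (s @ [n])) = 1"
        by (rule ci_blocks3) (use False ab1 S0 Sn z ts(2,4) in \<open>auto simp: Tn_iff Sm_iff\<close>)
      then show ?thesis by simp
    qed
    show ?thesis using pth ci by (simp add: cp1_def)
  qed
  have "h (last [0], hd [x, y]) + lsum h [x, y] + h (last [x, y], hd (z # t @ s @ [n])) =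
        h (last [0], hd [y, x]) + lsum h [y, x] + h (last [y, x], hd (z # t @ s @ [n]))"
    by (rule swap) (use P[of x y] P[of y x] in simp_all)
  then show ?thesis by simp
qed

lemma T2L:
  assumes x: "0 < x" "x < n" and y: "0 < y" "y < n" and xy: "x \<noteq> y" and ty: "x \<in> S \<longleftrightarrow> y \<in> S"
    and z: "z \<in> Tn" "z \<noteq> x" "z \<noteq> y"
  shows "h (z, x) + h (x, y) + h (y, n) = h (z, y) + h (y, x) + h (x, n)"
proof -
  define E where "E = {x, y, z}"
  have fE: "finite E" by (simp add: E_def)
  have cE: "card E \<le> 3" unfolding E_def by (rule card3)
  have kr: "3 + (p - 4) \<le> n - 1" using p4 pn by simp
  obtain t s where ts: "distinct t" "set t \<subseteq> Tn - E" "distinct s" "set s \<subseteq> Sm - E"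
      "length t + length s = p - 4"
    using fill[OF fE cE kr] by blast
  have P: "cp1 (0 # s @ t @ [z, a, b, n])" if ab: "(a = x \<and> b = y) \<or> (a = y \<and> b = x)" for a b
  proof -
    have ab1: "0 < a" "a < n" "0 < b" "b < n" "a \<noteq> b" "a \<in> E" "b \<in> E" "a \<noteq> z" "b \<noteq> z" "a \<in> S \<longleftrightarrow> b \<in> S"
      using ab x y xy z ty by (auto simp: E_def)
    have tE: "set t \<inter> E = {}" "set s \<inter> E = {}" using ts(2,4) by auto
    have ts': "set t \<inter> set s = {}" using ts(2,4) TnSm by blast
    have zE: "z \<in> E" by (simp add: E_def)
    have d: "distinct (s @ t @ [z, a, b])"
      using ab1 tE ts' zE ts(1,3) by auto
    have sI: "set (s @ t @ [z, a, b]) \<subseteq> {0<..<n}"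
      using z ab1 ts(2,4) by (auto simp: Tn_iff Sm_iff)
    have l: "length (s @ t @ [z, a, b]) = p - 1" using ts(5) p4 by simp
    have pth: "is_pPath n p (0 # (s @ t @ [z, a, b]) @ [n])"
      by (rule mk_path[OF d sI l]) (use p4 in simp)
    have ci: "lsum (ci S) (0 # s @ t @ [z, a, b, n]) = 1"
    proof (cases "a \<in> S")
      case True
      have "lsum (ci S) ((0 # s) @ (t @ [z]) @ [a, b, n]) = 1"
        by (rule ci_blocks3) (use True ab1 S0 Sn z ts(2,4) in \<open>auto simp: Tn_iff Sm_iff\<close>)
      then show ?thesis by simp
    next
      case False
      have "lsum (ci S) ((0 # s) @ (t @ [z, a, b]) @ [n]) = 1"
        by (rule ci_blocks3) (use False ab1 S0 Sn z ts(2,4) in \<open>auto simp: Tn_iff Sm_iff\<close>)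
      then show ?thesis by simp
    qed
    show ?thesis using pth ci by (simp add: cp1_def)
  qed
  have "h (last (0 # s @ t @ [z]), hd [x, y]) + lsum h [x, y] + h (last [x, y], hd [n]) =
        h (last (0 # s @ t @ [z]), hd [y, x]) + lsum h [y, x] + h (last [y, x], hd [n])"
    by (rule swap) (use P[of x y] P[of y x] in simp_all)
  then show ?thesis by simp
qed

lemma T_SS2a:
  assumes TT: "Tn \<subseteq> {x, y}" and U: "set U \<subseteq> Sm" "length U \<le> 1" and w: "w \<in> Sm" "w \<notin> set U"
    and x: "x \<in> Tn" and y: "y \<in> Tn" and xy: "x \<noteq> y"
  shows "h (last (0 # U), x) + h (x, w) = h (last (0 # U), y) + h (y, w)"
proof -
  define E where "E = set U \<union> {x, y, w}"
  have fE: "finite E" by (simp add: E_def)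
  have "card E \<le> card (set U) + card {x, y, w}" unfolding E_def by (rule card_Un_le)
  then have cE: "card E \<le> length U + 3" using card_length[of U] card3[of x y w] by linarith
  have kr: "length U + 3 + (p - 3 - length U) \<le> n - 1" using p4 pn U(2) by simp
  obtain t s where ts: "distinct t" "set t \<subseteq> Tn - E" "distinct s" "set s \<subseteq> Sm - E"
      "length t + length s = p - 3 - length U"
    using fill[OF fE cE kr] by blast
  have TE: "Tn - E = {}" using TT by (auto simp: E_def)
  have "set t \<subseteq> Tn - E" by (rule ts(2))
  also have "\<dots> = {}" by (rule TE)
  finally have t0: "t = []" by simp
  have P: "cp1 (0 # U @ v # w # t @ s @ [n])" if v: "v = x \<or> v = y" for v
  proof -
    have v1: "0 < v" "v < n" "v \<notin> S" "v \<notin> set U" "v \<noteq> w" "v \<in> E"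
      using v x y U(1) w by (auto simp: E_def Tn_iff Sm_iff)
    have dU: "distinct U" using U(2) by (rule distinct_le1)
    have tE: "set s \<inter> E = {}" using ts(4) by auto
    have UE: "set U \<subseteq> E" "w \<in> E" by (auto simp: E_def)
    have d: "distinct (U @ v # w # t @ s)"
      using dU v1 w tE UE ts(3) t0 by auto
    have sI: "set (U @ v # w # t @ s) \<subseteq> {0<..<n}"
      using U(1) w v1 ts(4) t0 by (auto simp: Tn_iff Sm_iff)
    have l: "length (U @ v # w # t @ s) = p - 1" using ts(5) U(2) p4 by simp
    have pth: "is_pPath n p (0 # (U @ v # w # t @ s) @ [n])"
      by (rule mk_path[OF d sI l]) (use p4 in simp)
    have ci: "lsum (ci S) (0 # U @ v # w # t @ s @ [n]) = 1"
    proof -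
      have "lsum (ci S) ((0 # U) @ [v] @ (w # s @ [n])) = 1"
        by (rule ci_blocks3) (use v1 S0 Sn U(1) w ts(4) in \<open>auto simp: Tn_iff Sm_iff\<close>)
      then show ?thesis using t0 by simp
    qed
    show ?thesis using pth ci by (simp add: cp1_def)
  qed
  have "h (last (0 # U), hd [x]) + lsum h [x] + h (last [x], hd (w # t @ s @ [n])) =
        h (last (0 # U), hd [y]) + lsum h [y] + h (last [y], hd (w # t @ s @ [n]))"
    by (rule swap) (use P[of x] P[of y] in simp_all)
  then show ?thesis by simp
qed

lemma T_SS2b:
  assumes TT: "Tn \<subseteq> {x, y}" and u: "u \<in> Sm" and x: "x \<in> Tn" and y: "y \<in> Tn" and xy: "x \<noteq> y"
  shows "h (u, x) + h (x, n) = h (u, y) + h (y, n)"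
proof -
  define E where "E = {x, y, u}"
  have fE: "finite E" by (simp add: E_def)
  have cE: "card E \<le> 3" unfolding E_def by (rule card3)
  have kr: "3 + (p - 3) \<le> n - 1" using p4 pn by simp
  obtain t s where ts: "distinct t" "set t \<subseteq> Tn - E" "distinct s" "set s \<subseteq> Sm - E"
      "length t + length s = p - 3"
    using fill[OF fE cE kr] by blast
  have TE: "Tn - E = {}" using TT by (auto simp: E_def)
  have "set t \<subseteq> Tn - E" by (rule ts(2))
  also have "\<dots> = {}" by (rule TE)
  finally have t0: "t = []" by simp
  have P: "cp1 (0 # s @ t @ u # v # [n])" if v: "v = x \<or> v = y" for v
  proof -
    have v1: "0 < v" "v < n" "v \<notin> S" "v \<noteq> u" "v \<in> E"
      using v x y u by (auto simp: E_def Tn_iff Sm_iff)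
    have tE: "set s \<inter> E = {}" using ts(4) by auto
    have uE: "u \<in> E" by (simp add: E_def)
    have d: "distinct (s @ t @ [u, v])"
      using v1 tE uE ts(3) t0 by auto
    have sI: "set (s @ t @ [u, v]) \<subseteq> {0<..<n}"
      using u v1 ts(4) t0 by (auto simp: Tn_iff Sm_iff)
    have l: "length (s @ t @ [u, v]) = p - 1" using ts(5) p4 by simp
    have pth: "is_pPath n p (0 # (s @ t @ [u, v]) @ [n])"
      by (rule mk_path[OF d sI l]) (use p4 in simp)
    have ci: "lsum (ci S) (0 # s @ t @ u # v # [n]) = 1"
    proof -
      have "lsum (ci S) ((0 # s @ [u]) @ [v] @ [n]) = 1"
        by (rule ci_blocks3) (use v1 S0 Sn u ts(4) in \<open>auto simp: Tn_iff Sm_iff\<close>)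
      then show ?thesis using t0 by simp
    qed
    show ?thesis using pth ci by (simp add: cp1_def)
  qed
  have "h (last (0 # s @ t @ [u]), hd [x]) + lsum h [x] + h (last [x], hd [n]) =
        h (last (0 # s @ t @ [u]), hd [y]) + lsum h [y] + h (last [y], hd [n])"
    by (rule swap) (use P[of x] P[of y] in simp_all)
  then show ?thesis by simp
qed

end


context pp
begin

lemma fin_Tn: "finite Tn" by (rule finite_subset[of _ "{..<n}"]) (auto simp: Tn_def)
lemma fin_Sm: "finite Sm" by (rule finite_subset[of _ "{..<n}"]) (auto simp: Sm_def)

lemma card_TnSm: "card Tn + card Sm = n - 1"
proof -
  have "Tn \<union> Sm = {0<..<n}" by (auto simp: Tn_def Sm_def)
  then have "card (Tn \<union> Sm) = n - 1" by simp
  moreover have "card (Tn \<union> Sm) = card Tn + card Sm" by (rule card_Un_disjoint[OF fin_Tn fin_Sm TnSm])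
  ultimately show ?thesis by simp
qed

lemma card_Sm: "card Sm = card S - 2"
proof -
  have n0: "0 < n" using n5 by simp
  have "S = insert 0 (insert n Sm)" using Ssub S0 Sn by (auto simp: Sm_def)
  moreover have "0 \<notin> insert n Sm" "n \<notin> Sm" using n0 by (auto simp: Sm_def)
  moreover have "card (insert 0 (insert n Sm)) = card Sm + 2" using fin_Sm n0 by (simp add: Sm_def)
  ultimately show ?thesis by simp
qed

lemma interior_avoid:
  assumes "finite A" "card A \<le> 3"
  shows "\<exists>z. 0 < z \<and> z < n \<and> z \<notin> A"
proof -
  have "card {0<..<n} - card A \<le> card ({0<..<n} - A)" by (rule diff_card_le_card_Diff[OF assms(1)])
  then have "card ({0<..<n} - A) > 0" using assms(2) n5 by simp
  then have "{0<..<n} - A \<noteq> {}" by (metis card.empty less_irrefl)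
  then show ?thesis by auto
qed

end

context pp1
begin

definition eqv :: "nat \<Rightarrow> nat \<Rightarrow> nat \<Rightarrow> nat \<Rightarrow> real" where
  "eqv x y u w = h (u, x) - h (u, y) + h (x, w) - h (y, w)"

definition Pp :: "nat \<Rightarrow> nat \<Rightarrow> bool" where
  "Pp x y \<longleftrightarrow> (\<forall>u w. u < n \<longrightarrow> u \<noteq> x \<longrightarrow> u \<noteq> y \<longrightarrow> 0 < w \<longrightarrow> w \<le> n \<longrightarrow> w \<noteq> x \<longrightarrow> w \<noteq> y
     \<longrightarrow> eqv x y u w = 0)"

lemma eqv_rect: "eqv x y u w = eqv x y u w' - eqv x y u' w' + eqv x y u' w"
  by (simp add: eqv_def)

lemma eqv_trans: "eqv x y u w = eqv x z u w + eqv z y u w"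
  by (simp add: eqv_def)

lemma eqv_sym: "eqv x y u w = - eqv y x u w"
  by (simp add: eqv_def)

lemma PpD: "Pp x y \<Longrightarrow> u < n \<Longrightarrow> u \<noteq> x \<Longrightarrow> u \<noteq> y \<Longrightarrow> 0 < w \<Longrightarrow> w \<le> n \<Longrightarrow> w \<noteq> x \<Longrightarrow> w \<noteq> y
  \<Longrightarrow> eqv x y u w = 0"
  unfolding Pp_def by blast

lemma Pp_sym: "Pp x y \<Longrightarrow> Pp y x"
  unfolding Pp_def using eqv_sym by (metis neg_equal_0_iff_equal)

lemma D1:
  assumes x: "0 < x" "x < n" and y: "0 < y" "y < n" and xy: "x \<noteq> y"
    and u: "u < n" "u \<in> S" "u \<noteq> x" "u \<noteq> y" and w: "w \<in> Tn" "w \<noteq> x" "w \<noteq> y"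
  shows "eqv x y u w = 0"
proof (cases "u = 0")
  case True
  have "h (last (0 # []), x) + h (x, w) = h (last (0 # []), y) + h (y, w)"
    by (rule T_ST) (use x y xy w in auto)
  then show ?thesis using True by (simp add: eqv_def)
next
  case False
  have uS: "u \<in> Sm" using False u by (simp add: Sm_iff)
  have "h (last (0 # [u]), x) + h (x, w) = h (last (0 # [u]), y) + h (y, w)"
    by (rule T_ST) (use x y xy w u uS in auto)
  then show ?thesis by (simp add: eqv_def)
qed

lemma D2:
  assumes x: "0 < x" "x < n" and y: "0 < y" "y < n" and xy: "x \<noteq> y"
    and u: "u \<in> Tn" "u \<noteq> x" "u \<noteq> y" and w: "0 < w" "w \<le> n" "w \<in> S" "w \<noteq> x" "w \<noteq> y"
  shows "eqv x y u w = 0"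
proof (cases "w = n")
  case True
  have "h (u, x) + h (x, hd ([] @ [n])) = h (u, y) + h (y, hd ([] @ [n]))"
    by (rule T_TS) (use x y xy u in auto)
  then show ?thesis using True by (simp add: eqv_def)
next
  case False
  have wS: "w \<in> Sm" using False w by (simp add: Sm_iff)
  have "h (u, x) + h (x, hd ([w] @ [n])) = h (u, y) + h (y, hd ([w] @ [n]))"
    by (rule T_TS) (use x y xy u w wS in auto)
  then show ?thesis by (simp add: eqv_def)
qed

lemma closure:
  assumes x: "0 < x" "x < n" and y: "0 < y" "y < n" and xy: "x \<noteq> y"
    and z: "z \<in> Tn" "z \<noteq> x" "z \<noteq> y"
    and u0: "u0 < n" "u0 \<noteq> x" "u0 \<noteq> y" and w0: "0 < w0" "w0 \<le> n" "w0 \<noteq> x" "w0 \<noteq> y"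
    and ty: "u0 \<in> S \<longleftrightarrow> w0 \<in> S" and lk: "eqv x y u0 w0 = 0"
  shows "Pp x y"
  unfolding Pp_def
proof (intro allI impI)
  fix u w assume u: "u < n" "u \<noteq> x" "u \<noteq> y" and w: "0 < w" "w \<le> n" "w \<noteq> x" "w \<noteq> y"
  have zz: "0 < z" "z < n" "z \<notin> S" using z by (auto simp: Tn_iff)
  have TnI: "\<And>v. 0 < v \<Longrightarrow> v < n \<Longrightarrow> v \<notin> S \<Longrightarrow> v \<in> Tn" by (simp add: Tn_iff)
  have x0: "x \<noteq> 0" "y \<noteq> 0" "x \<noteq> n" "y \<noteq> n" using x y by auto
  have d1: "\<And>a b. a < n \<Longrightarrow> a \<in> S \<Longrightarrow> a \<noteq> x \<Longrightarrow> a \<noteq> y \<Longrightarrow> 0 < b \<Longrightarrow> b \<le> n \<Longrightarrow> b \<notin> S \<Longrightarrow> b \<noteq> x \<Longrightarrow> b \<noteq> y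
      \<Longrightarrow> eqv x y a b = 0"
  proof -
    fix a b assume a: "a < n" "a \<in> S" "a \<noteq> x" "a \<noteq> y" and b: "0 < b" "b \<le> n" "b \<notin> S" "b \<noteq> x" "b \<noteq> y"
    have "b \<noteq> n" using b Sn by auto
    then have "b \<in> Tn" using b by (simp add: Tn_iff)
    then show "eqv x y a b = 0" using D1[OF x y xy a] b by simp
  qed
  have d2: "\<And>a b. a < n \<Longrightarrow> a \<notin> S \<Longrightarrow> a \<noteq> x \<Longrightarrow> a \<noteq> y \<Longrightarrow> 0 < b \<Longrightarrow> b \<le> n \<Longrightarrow> b \<in> S \<Longrightarrow> b \<noteq> x \<Longrightarrow> b \<noteq> y
      \<Longrightarrow> eqv x y a b = 0"
  proof -
    fix a b assume a: "a < n" "a \<notin> S" "a \<noteq> x" "a \<noteq> y" and b: "0 < b" "b \<le> n" "b \<in> S" "b \<noteq> x" "b \<noteq> y"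
    have "a \<noteq> 0"
    proof
      assume "a = 0" then show False using a(2) S0 by simp
    qed
    then have "a \<in> Tn" using a by (simp add: Tn_iff)
    then show "eqv x y a b = 0" using D2[OF x y xy _ _ _ b] a by simp
  qed
  show "eqv x y u w = 0"
  proof (cases "u \<in> S")
    case uS: True
    show ?thesis
    proof (cases "w \<in> S")
      case wS: True
      show ?thesis
      proof (cases "u0 \<in> S")
        case True
        have "eqv x y u w = eqv x y u z - eqv x y u0 z + eqv x y u0 w" by (rule eqv_rect)
        moreover have "eqv x y u0 w = eqv x y u0 w0 - eqv x y z w0 + eqv x y z w" by (rule eqv_rect)
        moreover have "eqv x y u z = 0" using d1[of u z] u uS zz z by simp
        moreover have "eqv x y u0 z = 0" using d1[of u0 z] u0 True zz z by simp
        moreover have "eqv x y z w0 = 0" using d2[of z w0] w0 True ty zz z by simp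
        moreover have "eqv x y z w = 0" using d2[of z w] w wS zz z by simp
        ultimately show ?thesis using lk by linarith
      next
        case False
        have "eqv x y u w = eqv x y u w0 - eqv x y u0 w0 + eqv x y u0 w" by (rule eqv_rect)
        moreover have "eqv x y u w0 = 0" using d1[of u w0] u uS w0 False ty by simp
        moreover have "eqv x y u0 w = 0" using d2[of u0 w] u0 False w wS by simp
        ultimately show ?thesis using lk by linarith
      qed
    next
      case False
      then show ?thesis using d1[of u w] u uS w by simp
    qed
  next
    case uT: False
    show ?thesis
    proof (cases "w \<in> S")
      case True
      then show ?thesis using d2[of u w] u uT w by simp
    next
      case wT: False
      show ?thesis
      proof (cases "u0 \<in> S")
        case True
        have "eqv x y u w = eqv x y u w0 - eqv x y u0 w0 + eqv x y u0 w" by (rule eqv_rect)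
        moreover have "eqv x y u w0 = 0" using d2[of u w0] u uT w0 True ty by simp
        moreover have "eqv x y u0 w = 0" using d1[of u0 w] u0 True w wT by simp
        ultimately show ?thesis using lk by linarith
      next
        case False
        have "eqv x y u w = eqv x y u n - eqv x y u0 n + eqv x y u0 w" by (rule eqv_rect)
        moreover have "eqv x y u0 w = eqv x y u0 w0 - eqv x y 0 w0 + eqv x y 0 w" by (rule eqv_rect)
        moreover have "eqv x y u n = 0" using d2[of u n] u uT x0 Sn n5 by simp
        moreover have "eqv x y u0 n = 0" using d2[of u0 n] u0 False x0 Sn n5 by simp
        moreover have "eqv x y 0 w0 = 0" using d1[of 0 w0] x0 S0 n5 w0 False ty by simp
        moreover have "eqv x y 0 w = 0" using d1[of 0 w] x0 S0 n5 w wT by simp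
        ultimately show ?thesis using lk by linarith
      qed
    qed
  qed
qed

lemma link_same:
  assumes x: "0 < x" "x < n" and y: "0 < y" "y < n" and xy: "x \<noteq> y" and ty: "x \<in> S \<longleftrightarrow> y \<in> S"
    and z: "z \<in> Tn" "z \<noteq> x" "z \<noteq> y"
  shows "eqv x y z z = 0"
proof -
  have a: "h (z, x) + h (x, hd ([] @ [n])) = h (z, y) + h (y, hd ([] @ [n]))"
    by (rule T_TS) (use x y xy z in auto)
  have b: "h (z, x) + h (x, y) + h (y, n) = h (z, y) + h (y, x) + h (x, n)"
    by (rule T2L[OF x y xy ty z])
  have c: "h (last (0 # []), x) + h (x, z) = h (last (0 # []), y) + h (y, z)"
    by (rule T_ST) (use x y xy z in auto)
  have d: "h (0, x) + h (x, y) + h (y, z) = h (0, y) + h (y, x) + h (x, z)"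
    by (rule T2R[OF x y xy ty z])
  show ?thesis using a b c d by (simp add: eqv_def)
qed

lemma Pp_same:
  assumes x: "0 < x" "x < n" and y: "0 < y" "y < n" and xy: "x \<noteq> y" and ty: "x \<in> S \<longleftrightarrow> y \<in> S"
    and z: "z \<in> Tn" "z \<noteq> x" "z \<noteq> y"
  shows "Pp x y"
proof -
  have zz: "0 < z" "z < n" "z \<le> n" using z by (auto simp: Tn_iff)
  show ?thesis
    by (rule closure[OF x y xy z, of z z]) (use zz z link_same[OF x y xy ty z] in auto)
qed

lemma Pp_T2:
  assumes x: "x \<in> Tn" and y: "y \<in> Tn" and xy: "x \<noteq> y" and TT: "Tn \<subseteq> {x, y}"
    and c2: "2 \<le> card Sm"
  shows "Pp x y"
proof -
  have xx: "0 < x" "x < n" "x \<notin> S" "0 < y" "y < n" "y \<notin> S" using x y by (auto simp: Tn_iff)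
  have dir: "eqv x y u w = 0" if u: "u = 0 \<or> u \<in> Sm" and w: "w = n \<or> w \<in> Sm" and uw: "u \<noteq> w"
    and nn: "\<not> (u = 0 \<and> w = n)" for u w
  proof (cases "w = n")
    case True
    then have uS: "u \<in> Sm" using u nn by auto
    have "h (u, x) + h (x, n) = h (u, y) + h (y, n)" by (rule T_SS2b[OF TT uS x y xy])
    then show ?thesis using True by (simp add: eqv_def)
  next
    case False
    then have wS: "w \<in> Sm" using w by auto
    show ?thesis
    proof (cases "u = 0")
      case True
      have "h (last (0 # []), x) + h (x, w) = h (last (0 # []), y) + h (y, w)"
        by (rule T_SS2a[OF TT]) (use wS x y xy in auto)
      then show ?thesis using True by (simp add: eqv_def)
    next
      case False
      then have uS: "u \<in> Sm" using u by auto
      have "h (last (0 # [u]), x) + h (x, w) = h (last (0 # [u]), y) + h (y, w)"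
        by (rule T_SS2a[OF TT]) (use wS uS uw x y xy in auto)
      then show ?thesis by (simp add: eqv_def)
    qed
  qed
  obtain a b where ab: "a \<in> Sm" "b \<in> Sm" "a \<noteq> b"
  proof -
    have "1 < card Sm" using c2 by simp
    then obtain a b where "a \<in> Sm" "b \<in> Sm" "a \<noteq> b" using card_le_Suc0_iff_eq[OF fin_Sm] by (metis not_le One_nat_def)
    then show ?thesis using that by blast
  qed
  have a0: "a \<noteq> 0" "a \<noteq> n" "b \<noteq> 0" "b \<noteq> n" using ab by (auto simp: Sm_iff)
  show ?thesis unfolding Pp_def
  proof (intro allI impI)
    fix u w assume u: "u < n" "u \<noteq> x" "u \<noteq> y" and w: "0 < w" "w \<le> n" "w \<noteq> x" "w \<noteq> y"
    have u': "u = 0 \<or> u \<in> Sm"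
    proof (cases "u = 0")
      case False
      then have "u \<notin> Tn" using TT u by auto
      then show ?thesis using False u by (auto simp: Tn_iff Sm_iff)
    qed simp
    have w': "w = n \<or> w \<in> Sm"
    proof (cases "w = n")
      case False
      then have "w \<notin> Tn" using TT w by auto
      then show ?thesis using False w by (auto simp: Tn_iff Sm_iff)
    qed simp
    show "eqv x y u w = 0"
    proof (cases "u = w")
      case True
      then have uS: "u \<in> Sm" using u' w' u w by auto
      obtain c where c: "c \<in> Sm" "c \<noteq> u" using ab by blast
      have "eqv x y u u = eqv x y u c - eqv x y 0 c + eqv x y 0 u" by (rule eqv_rect)
      moreover have "eqv x y u c = 0" using dir[of u c] uS c by (auto simp: Sm_iff)
      moreover have "eqv x y 0 c = 0" using dir[of 0 c] c by (auto simp: Sm_iff)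
      moreover have "eqv x y 0 u = 0" using dir[of 0 u] uS by (auto simp: Sm_iff)
      ultimately have "eqv x y u u = 0" by linarith
      then show ?thesis using True by simp
    next
      case False
      show ?thesis
      proof (cases "u = 0 \<and> w = n")
        case True
        have "eqv x y 0 n = eqv x y 0 a - eqv x y b a + eqv x y b n" by (rule eqv_rect)
        moreover have "eqv x y 0 a = 0" using dir[of 0 a] ab a0 by simp
        moreover have "eqv x y b a = 0" using dir[of b a] ab a0 by simp
        moreover have "eqv x y b n = 0" using dir[of b n] ab a0 by simp
        ultimately have "eqv x y 0 n = 0" by linarith
        then show ?thesis using True by simp
      next
        case nn: False
        show ?thesis using dir[OF u' w' False nn] .
      qed
    qed
  qed
qed

end


context pp1
begin

lemma cross_all:
  assumes x0: "x0 \<in> Sm" and y0: "y0 \<in> Tn" and z0: "z0 \<in> Tn" "z0 \<noteq> y0" and base: "eqv x0 y0 z0 z0 = 0"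
    and same: "\<And>x y. 0 < x \<Longrightarrow> x < n \<Longrightarrow> 0 < y \<Longrightarrow> y < n \<Longrightarrow> x \<noteq> y \<Longrightarrow> (x \<in> S \<longleftrightarrow> y \<in> S) \<Longrightarrow> Pp x y"
    and x: "x \<in> Sm" and y: "y \<in> Tn"
  shows "Pp x y"
proof -
  have xx0: "0 < x0" "x0 < n" "x0 \<in> S" using x0 by (auto simp: Sm_iff)
  have yy0: "0 < y0" "y0 < n" "y0 \<notin> S" using y0 by (auto simp: Tn_iff)
  have zz0: "0 < z0" "z0 < n" "z0 \<notin> S" using z0 by (auto simp: Tn_iff)
  have xx: "0 < x" "x < n" "x \<in> S" using x by (auto simp: Sm_iff)
  have yy: "0 < y" "y < n" "y \<notin> S" using y by (auto simp: Tn_iff)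
  have neq: "x0 \<noteq> y0" "z0 \<noteq> x0" "z0 \<noteq> x" "x \<noteq> y" "x \<noteq> y0" using xx0 yy0 zz0 xx yy by auto
  have P0: "Pp x0 y0"
    by (rule closure[of x0 y0 z0 z0 z0]) (use xx0 yy0 zz0 z0 neq base in auto)
  have P1: "Pp x' y0" if x': "x' \<in> Sm" for x'
  proof (cases "x' = x0")
    case True then show ?thesis using P0 by simp
  next
    case False
    have xx': "0 < x'" "x' < n" "x' \<in> S" using x' by (auto simp: Sm_iff)
    have Pxx0: "Pp x' x0" using same[of x' x0] xx' xx0 False by simp
    have "eqv x' y0 z0 z0 = eqv x' x0 z0 z0 + eqv x0 y0 z0 z0" by (rule eqv_trans)
    moreover have "eqv x' x0 z0 z0 = 0" using PpD[OF Pxx0, of z0 z0] xx' xx0 zz0 by auto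
    ultimately have lk: "eqv x' y0 z0 z0 = 0" using base by simp
    show ?thesis
      by (rule closure[of x' y0 z0 z0 z0]) (use xx' yy0 zz0 z0 lk in auto)
  qed
  show ?thesis
  proof (cases "y = y0")
    case True then show ?thesis using P1[OF x] by simp
  next
    case False
    obtain z where z: "0 < z" "z < n" "z \<notin> {x, y, y0}"
      using interior_avoid[of "{x, y, y0}"] card3 by auto
    have Pyy: "Pp y0 y" using same[of y0 y] yy0 yy False by simp
    have "eqv x y z z = eqv x y0 z z + eqv y0 y z z" by (rule eqv_trans)
    moreover have "eqv x y0 z z = 0" using PpD[OF P1[OF x], of z z] z by auto
    moreover have "eqv y0 y z z = 0" using PpD[OF Pyy, of z z] z by auto
    ultimately have lk: "eqv x y z z = 0" by simp
    show ?thesis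
      by (rule closure[of x y y0 z z]) (use xx yy yy0 y0 z lk False neq in auto)
  qed
qed

lemma all_pairs:
  assumes x0: "x0 \<in> Sm" and y0: "y0 \<in> Tn" and z0: "z0 \<in> Tn" "z0 \<noteq> y0" and base: "eqv x0 y0 z0 z0 = 0"
    and x: "0 < x" "x < n" and y: "0 < y" "y < n" and xy: "x \<noteq> y"
  shows "Pp x y"
proof -
  have same: "Pp a b" if a: "0 < a" "a < n" and b: "0 < b" "b < n" and ab: "a \<noteq> b" and ty: "a \<in> S \<longleftrightarrow> b \<in> S" for a b
  proof (cases "a \<in> S")
    case True
    have "y0 \<noteq> a" "y0 \<noteq> b" using y0 True ty by (auto simp: Tn_iff)
    then show ?thesis using Pp_same[OF a b ab ty y0] by simp
  next
    case False
    then have aT: "a \<in> Tn" "b \<in> Tn" using a b ty by (auto simp: Tn_iff)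
    show ?thesis
    proof (cases "\<exists>z\<in>Tn. z \<noteq> a \<and> z \<noteq> b")
      case True
      then obtain z where "z \<in> Tn" "z \<noteq> a" "z \<noteq> b" by blast
      then show ?thesis using Pp_same[OF a b ab ty] by simp
    next
      case False
      then have TT: "Tn \<subseteq> {a, b}" by blast
      have "card Tn \<le> card {a, b}" using card_mono[OF _ TT] by simp
      moreover have "card {a, b} \<le> 2" by (simp add: card_insert_if)
      ultimately have "card Tn \<le> 2" by linarith
      then have "2 \<le> card Sm" using card_TnSm n5 by linarith
      then show ?thesis using Pp_T2[OF aT ab TT] by simp
    qed
  qed
  show ?thesis
  proof (cases "x \<in> S \<longleftrightarrow> y \<in> S")
    case True then show ?thesis using same[OF x y xy] by simp
  next
    case False
    show ?thesis
    proof (cases "x \<in> S")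
      case True
      then have "x \<in> Sm" "y \<in> Tn" using False x y by (auto simp: Sm_iff Tn_iff)
      then show ?thesis using cross_all[OF x0 y0 z0 base same] by blast
    next
      case False2: False
      then have "y \<in> Sm" "x \<in> Tn" using False x y by (auto simp: Sm_iff Tn_iff)
      then have "Pp y x" using cross_all[OF x0 y0 z0 base same] by blast
      then show ?thesis by (rule Pp_sym)
    qed
  qed
qed

lemma potential:
  assumes A: "\<And>x y. 0 < x \<Longrightarrow> x < n \<Longrightarrow> 0 < y \<Longrightarrow> y < n \<Longrightarrow> x \<noteq> y \<Longrightarrow> Pp x y"
  shows "\<exists>pt beta. \<forall>i j. (i, j) \<in> arcs n \<longrightarrow> h (i, j) = pt j - pt i + beta"
proof -
  have R1: "h (i, j) - h (0, j) = h (i, j') - h (0, j')"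
    if "0 < i" "i < n" "0 < j" "j < n" "0 < j'" "j' < n" "i \<noteq> j" "i \<noteq> j'" "j \<noteq> j'" for i j j'
  proof -
    have "eqv j j' i n = 0" using PpD[OF A[of j j'], of i n] that by auto
    moreover have "eqv j j' 0 n = 0" using PpD[OF A[of j j'], of 0 n] that by auto
    ultimately show ?thesis by (simp add: eqv_def)
  qed
  have R2: "h (i, j) + h (0, i) = h (i', j) + h (0, i')"
    if "0 < i" "i < n" "0 < j" "j < n" "0 < i'" "i' < n" "i \<noteq> j" "i \<noteq> i'" "j \<noteq> i'" for i j i'
  proof -
    have "eqv i i' 0 j = 0" using PpD[OF A[of i i'], of 0 j] that by auto
    then show ?thesis by (simp add: eqv_def)
  qed
  have R3: "h (i, n) + h (0, i) = h (i', n) + h (0, i')"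
    if "0 < i" "i < n" "0 < i'" "i' < n" "i \<noteq> i'" for i i'
  proof -
    have "eqv i i' 0 n = 0" using PpD[OF A[of i i'], of 0 n] that by auto
    then show ?thesis by (simp add: eqv_def)
  qed
  define rho where "rho i j = h (i, j) + h (0, i) - h (0, j)" for i j
  have n5': "3 < n" using n5 by simp
  have rho: "rho i j = rho 1 2" if ij: "0 < i" "i < n" "0 < j" "j < n" "i \<noteq> j" for i j
  proof (cases "i = 2")
    case False
    have a: "rho i j = rho i 2"
    proof (cases "j = 2")
      case False
      then show ?thesis using R1[of i j 2] ij n5' \<open>i \<noteq> 2\<close> unfolding rho_def by simp
    qed simp
    have b: "rho i 2 = rho 1 2"
    proof (cases "i = 1")
      case False
      then show ?thesis using R2[of i 2 1] ij n5' \<open>i \<noteq> 2\<close> unfolding rho_def by simp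
    qed simp
    show ?thesis using a b by simp
  next
    case True
    show ?thesis
    proof (cases "j = 1")
      case False
      have "rho 2 j = rho 1 j" using R2[of 2 j 1] ij n5' True False unfolding rho_def by simp
      moreover have "rho 1 j = rho 1 2" using R1[of 1 j 2] ij n5' True False unfolding rho_def by simp
      ultimately show ?thesis using True by simp
    next
      case j1: True
      have "rho 2 1 = rho 3 1" using R2[of 2 1 3] n5' unfolding rho_def by simp
      moreover have "rho 3 1 = rho 3 2" using R1[of 3 1 2] n5' unfolding rho_def by simp
      moreover have "rho 3 2 = rho 1 2" using R2[of 3 2 1] n5' unfolding rho_def by simp
      ultimately show ?thesis using True j1 by simp
    qed
  qed
  define beta where "beta = rho 1 2"
  define gam where "gam = h (1, n) + h (0, 1)"
  define pt where "pt v = (if v = 0 then beta else if v = n then gam - beta else h (0, v))" for v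
  have "\<forall>i j. (i, j) \<in> arcs n \<longrightarrow> h (i, j) = pt j - pt i + beta"
  proof (intro allI impI)
    fix i j assume a: "(i, j) \<in> arcs n"
    then have a': "i \<le> n" "j \<le> n" "i \<noteq> j" "j \<noteq> 0" "i \<noteq> n" "(i, j) \<noteq> (0, n)" by (auto simp: arcs_def)
    show "h (i, j) = pt j - pt i + beta"
    proof (cases "i = 0")
      case True
      then have "j \<noteq> n" "j \<noteq> 0" using a' by auto
      then show ?thesis using True by (simp add: pt_def)
    next
      case False
      then have i': "0 < i" "i < n" using a' by auto
      show ?thesis
      proof (cases "j = n")
        case True
        have "h (i, n) + h (0, i) = gam"
        proof (cases "i = 1")
          case False
          then show ?thesis using R3[of i 1] i' n5' unfolding gam_def by simp
        qed (simp add: gam_def)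
        then show ?thesis using True i' by (simp add: pt_def)
      next
        case False
        then have j': "0 < j" "j < n" using a' by auto
        have "rho i j = beta" using rho[of i j] i' j' a' unfolding beta_def by simp
        then show ?thesis using i' j' unfolding pt_def rho_def by simp
      qed
    qed
  qed
  then show ?thesis by blast
qed

end

context pp
begin

lemma comb:
  assumes c3: "3 \<le> card S" and cp: "card S \<le> p" and H: "\<And>vs. cp1 vs \<Longrightarrow> lsum lam vs = K"
  shows "\<exists>C mu. \<forall>vs. is_pPath n p vs \<longrightarrow> lsum lam vs = C + mu * lsum (ci S) vs"
proof -
  have "card Sm \<ge> 1" using card_Sm c3 by simp
  then obtain x0 where x0: "x0 \<in> Sm" by (metis card.empty ex_in_conv not_one_le_zero)
  have cT: "card Tn \<ge> 2" using card_TnSm card_Sm c3 cp pn by linarith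
  obtain y0 z0 where yz: "y0 \<in> Tn" "z0 \<in> Tn" "z0 \<noteq> y0"
  proof -
    have "1 < card Tn" using cT by simp
    then obtain a b where "a \<in> Tn" "b \<in> Tn" "a \<noteq> b" using card_le_Suc0_iff_eq[OF fin_Tn] by (metis not_le One_nat_def)
    then show ?thesis using that by blast
  qed
  define mu where "mu = lam (z0, x0) - lam (z0, y0) + lam (x0, z0) - lam (y0, z0)"
  define h where "h a = lam a - mu * ci S a" for a
  interpret I: pp1 n p S h "K - mu"
  proof unfold_locales
    fix vs assume "cp1 vs"
    then have "lsum lam vs = K" "lsum (ci S) vs = 1" using H by (auto simp: cp1_def)
    moreover have "lsum h vs = lsum lam vs - mu * lsum (ci S) vs"
      unfolding h_def by (rule lsum_lin)
    ultimately show "lsum h vs = K - mu" by simp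
  qed
  have xx0: "x0 \<in> S" using x0 by (simp add: Sm_iff)
  have yy0: "y0 \<notin> S" "z0 \<notin> S" using yz by (auto simp: Tn_iff)
  have base: "I.eqv x0 y0 z0 z0 = 0"
    using xx0 yy0 by (simp add: I.eqv_def h_def mu_def)
  have A: "I.Pp x y" if "0 < x" "x < n" "0 < y" "y < n" "x \<noteq> y" for x y
    by (rule I.all_pairs[OF x0 yz base that])
  obtain pt beta where pot: "\<forall>i j. (i, j) \<in> arcs n \<longrightarrow> h (i, j) = pt j - pt i + beta"
    using I.potential[OF A] by blast
  have "\<forall>vs. is_pPath n p vs \<longrightarrow> lsum lam vs = (pt n - pt 0 + real p * beta) + mu * lsum (ci S) vs"
  proof (intro allI impI)
    fix vs assume pv: "is_pPath n p vs"
    then have pv': "length vs = p + 1" "hd vs = 0" "last vs = n" "set (zip vs (tl vs)) \<subseteq> arcs n"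
      unfolding is_pPath_def by auto
    have ne: "vs \<noteq> []" using pv' by auto
    have "\<forall>(i, j)\<in>set (zip vs (tl vs)). h (i, j) = pt j - pt i + beta" using pot pv'(4) by blast
    then have "lsum h vs = pt (last vs) - pt (hd vs) + real (length vs - 1) * beta"
      using ne by (rule lsum_tele)
    then have "lsum h vs = pt n - pt 0 + real p * beta" using pv' by simp
    moreover have "lsum h vs = lsum lam vs - mu * lsum (ci S) vs"
      unfolding h_def by (rule lsum_lin)
    ultimately show "lsum lam vs = (pt n - pt 0 + real p * beta) + mu * lsum (ci S) vs" by simp
  qed
  then show ?thesis by blast
qed

end


lemma sum_fun_apply: "finite A \<Longrightarrow> (\<Sum>i\<in>A. f i) x = (\<Sum>i\<in>A. f i x)"
  for f :: "'i \<Rightarrow> 'a \<Rightarrow> 'b::comm_monoid_add"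
  by (induction A rule: finite_induct) auto

lemma incidence_sum: "finite A \<Longrightarrow> incidence A = (\<Sum>e\<in>A. incidence {e})"
  by (rule ext) (simp add: sum_fun_apply incidence_def)

lemma xsum_linear: "linear (xsum F)"
  by (rule linearI) (simp_all add: xsum_def sum.distrib scaleR_fun_def sum_distrib_left)

lemma finite_arcs: "finite (arcs n)"
  by (rule finite_subset[of _ "{0..n} \<times> {0..n}"]) (auto simp: arcs_def)

lemma path_arcs_sub: "is_pPath n p vs \<Longrightarrow> path_arcs vs \<subseteq> arcs n"
  by (simp add: is_pPath_def path_arcs_def)

lemma xsum_inc:
  assumes pv: "is_pPath n p vs"
  shows "xsum (cut n S ({0..n} - S)) (incidence (path_arcs vs)) = lsum (ci S) vs"
proof -
  let ?F = "cut n S ({0..n} - S)" and ?PA = "path_arcs vs"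
  have fF: "finite ?F" by (rule finite_subset[OF _ finite_arcs[of n]]) (auto simp: cut_def)
  have PA: "?PA \<subseteq> arcs n" by (rule path_arcs_sub[OF pv])
  have fPA: "finite ?PA" using PA finite_arcs finite_subset by blast
  have "xsum ?F (incidence ?PA) = (\<Sum>a\<in>?F. if a \<in> ?PA then 1 else 0)"
    by (simp add: xsum_def incidence_def)
  also have "\<dots> = sum (\<lambda>_. 1) (?F \<inter> ?PA)" by (rule sum.inter_restrict[OF fF, symmetric])
  also have "?F \<inter> ?PA = ?PA \<inter> ?F" by blast
  also have "sum (\<lambda>_. 1) (?PA \<inter> ?F) = (\<Sum>a\<in>?PA. if a \<in> ?F then 1 else 0)"
    by (rule sum.inter_restrict[OF fPA])
  also have "\<dots> = (\<Sum>a\<in>?PA. ci S a)"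
  proof (rule sum.cong[OF refl])
    fix a assume "a \<in> ?PA"
    then have "a \<in> arcs n" using PA by blast
    then show "(if a \<in> ?F then 1 else 0) = ci S a"
      by (cases a) (auto simp: cut_def arcs_def)
  qed
  also have "\<dots> = lsum (ci S) vs"
    by (rule lsum_set) (use pv in \<open>simp add: is_pPath_def\<close>)
  finally show ?thesis .
qed

lemma finite_X: "finite {incidence (path_arcs vs) | vs. is_pPath n p vs}"
proof -
  have "{incidence (path_arcs vs) | vs. is_pPath n p vs} \<subseteq> incidence ` Pow (arcs n)"
    using path_arcs_sub by blast
  moreover have "finite (incidence ` Pow (arcs n))" using finite_arcs by simp
  ultimately show ?thesis using finite_subset by blast
qed

lemma convex_ge: "linear l \<Longrightarrow> convex {x. (c::real) \<le> l x}"
proof (rule convexI)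
  fix x y and u v :: real assume l: "linear l" and xy: "x \<in> {x. c \<le> l x}" "y \<in> {x. c \<le> l x}"
    and uv: "0 \<le> u" "0 \<le> v" "u + v = 1"
  have "l (u *\<^sub>R x + v *\<^sub>R y) = u * l x + v * l y" using l by (simp add: linear_add linear_scale)
  moreover have "u * c \<le> u * l x" "v * c \<le> v * l y" using xy uv by (auto intro: mult_left_mono)
  moreover have "u * c + v * c = c" proof -
    have "u * c + v * c = (u + v) * c" by (simp add: distrib_right)
    then show ?thesis using uv(3) by simp
  qed
  ultimately show "u *\<^sub>R x + v *\<^sub>R y \<in> {x. c \<le> l x}" by simp
qed

lemma convex_eq: "linear l \<Longrightarrow> convex {x. l x = (c::real)}"
proof (rule convexI)
  fix x y and u v :: real assume l: "linear l" and xy: "x \<in> {x. l x = c}" "y \<in> {x. l x = c}"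
    and uv: "0 \<le> u" "0 \<le> v" "u + v = 1"
  have "l (u *\<^sub>R x + v *\<^sub>R y) = u * l x + v * l y" using l by (simp add: linear_add linear_scale)
  moreover have "u * c + v * c = c" proof -
    have "u * c + v * c = (u + v) * c" by (simp add: distrib_right)
    then show ?thesis using uv(3) by simp
  qed
  ultimately show "u *\<^sub>R x + v *\<^sub>R y \<in> {x. l x = c}" using xy by simp
qed


context pp
begin

lemma cS2: "2 \<le> card S"
proof -
  have fS: "finite S" using Ssub finite_subset by blast
  have "card {0, n} = 2" using n5 by simp
  moreover have "card {0, n} \<le> card S" using card_mono[OF fS] S0 Sn by simp
  ultimately show ?thesis by simp
qed

lemma exists_c1:
  assumes cp: "card S \<le> p"
  shows "\<exists>vs. is_pPath n p vs \<and> lsum (ci S) vs = 1"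
proof -
  have "card Tn \<ge> 2" using card_TnSm card_Sm cp pn cS2 by linarith
  then obtain z where z: "z \<in> Tn" by (metis card.empty ex_in_conv not_numeral_le_zero)
  have fE: "finite {z}" by simp
  have cE: "card {z} \<le> 1" by simp
  have kr: "1 + (p - 2) \<le> n - 1" using p4 pn by simp
  obtain t s where ts: "distinct t" "set t \<subseteq> Tn - {z}" "distinct s" "set s \<subseteq> Sm - {z}"
      "length t + length s = p - 2"
    using fill[OF fE cE kr] by blast
  have ts': "set t \<inter> set s = {}" using ts(2,4) TnSm by blast
  have d: "distinct (z # t @ s)" using ts ts' z by auto
  have sI: "set (z # t @ s) \<subseteq> {0<..<n}" using z ts(2,4) by (auto simp: Tn_iff Sm_iff)
  have l: "length (z # t @ s) = p - 1" using ts(5) p4 by simp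
  have pth: "is_pPath n p (0 # (z # t @ s) @ [n])" by (rule mk_path[OF d sI l]) (use p4 in simp)
  have "lsum (ci S) ([0] @ (z # t) @ (s @ [n])) = 1"
    by (rule ci_blocks3) (use S0 Sn z ts(2,4) in \<open>auto simp: Tn_iff Sm_iff\<close>)
  then show ?thesis using pth by (intro exI[of _ "0 # (z # t @ s) @ [n]"]) simp
qed

lemma exists_c2:
  assumes c3: "3 \<le> card S" and cp: "card S \<le> p"
  shows "\<exists>vs. is_pPath n p vs \<and> lsum (ci S) vs = 2"
proof -
  have "card Sm \<ge> 1" using card_Sm c3 by simp
  then obtain m where m: "m \<in> Sm" by (metis card.empty ex_in_conv not_one_le_zero)
  have cT: "card Tn \<ge> 2" using card_TnSm card_Sm c3 cp pn by linarith
  obtain y1 y2 where yy: "y1 \<in> Tn" "y2 \<in> Tn" "y1 \<noteq> y2"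
  proof -
    have "1 < card Tn" using cT by simp
    then obtain a b where "a \<in> Tn" "b \<in> Tn" "a \<noteq> b" using card_le_Suc0_iff_eq[OF fin_Tn] by (metis not_le One_nat_def)
    then show ?thesis using that by blast
  qed
  have my: "m \<noteq> y1" "m \<noteq> y2" using m yy TnSm by auto
  have fE: "finite {y1, m, y2}" by simp
  have cE: "card {y1, m, y2} \<le> 3" by (rule card3)
  have kr: "3 + (p - 4) \<le> n - 1" using p4 pn by simp
  obtain t s where ts: "distinct t" "set t \<subseteq> Tn - {y1, m, y2}" "distinct s" "set s \<subseteq> Sm - {y1, m, y2}"
      "length t + length s = p - 4"
    using fill[OF fE cE kr] by blast
  have ts': "set t \<inter> set s = {}" using ts(2,4) TnSm by blast
  have d: "distinct (y1 # m # y2 # t @ s)" using ts ts' yy my by auto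
  have sI: "set (y1 # m # y2 # t @ s) \<subseteq> {0<..<n}" using m yy ts(2,4) by (auto simp: Tn_iff Sm_iff)
  have l: "length (y1 # m # y2 # t @ s) = p - 1" using ts(5) p4 by simp
  have pth: "is_pPath n p (0 # (y1 # m # y2 # t @ s) @ [n])" by (rule mk_path[OF d sI l]) (use p4 in simp)
  have "lsum (ci S) ([0] @ [y1] @ [m] @ (y2 # t) @ (s @ [n])) = 2"
    by (rule ci_blocks5) (use S0 Sn m yy ts(2,4) in \<open>auto simp: Tn_iff Sm_iff\<close>)
  then show ?thesis using pth by (intro exI[of _ "0 # (y1 # m # y2 # t @ s) @ [n]"]) simp
qed

lemma exists_c0:
  assumes cp: "p < card S"
  shows "\<exists>vs. is_pPath n p vs \<and> lsum (ci S) vs = 0"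
proof -
  have cS: "card Sm \<ge> p - 1" using card_Sm cp by simp
  define L where "L = take (p - 1) (sorted_list_of_set Sm)"
  have d: "distinct L" by (simp add: L_def)
  have sL: "set L \<subseteq> Sm" unfolding L_def using set_take_subset fin_Sm by (metis set_sorted_list_of_set)
  have sI: "set L \<subseteq> {0<..<n}" using sL by (auto simp: Sm_iff)
  have l: "length L = p - 1" using cS fin_Sm by (simp add: L_def)
  have pth: "is_pPath n p (0 # L @ [n])" by (rule mk_path[OF d sI l]) (use p4 in simp)
  have "lsum (ci S) (0 # L @ [n]) = 0"
    by (rule lsum_ci_allS) (use sL S0 Sn in \<open>auto simp: Sm_iff\<close>)
  then show ?thesis using pth by blast
qed

lemma all_c1:
  assumes c2: "card S \<le> 2" and pv: "is_pPath n p vs"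
  shows "lsum (ci S) vs = 1"
proof -
  have sub: "{0, n} \<subseteq> S" using S0 Sn by simp
  have fS: "finite S" using Ssub finite_subset by blast
  have "card {0, n} = 2" using n5 by simp
  then have Seq: "S = {0, n}" using card_seteq[OF fS sub] c2 by simp
  obtain ws where ws: "vs = 0 # ws @ [n]" "distinct ws" "set ws \<subseteq> {0<..<n}" "length ws = p - 1"
    using path_decomp[OF pv] p4 by auto
  have "ws \<noteq> []" using ws(4) p4 by auto
  have "lsum (ci S) ([0] @ ws @ [n]) = 1"
    by (rule ci_blocks3) (use \<open>ws \<noteq> []\<close> ws(3) Seq in auto)
  then show ?thesis using ws(1) by simp
qed

lemma valid_paths:
  assumes cp: "card S \<le> p" and pv: "is_pPath n p vs"
  shows "lsum (ci S) vs \<ge> 1"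
proof -
  have L: "length vs = p + 1" "distinct vs" "hd vs = 0" using pv by (auto simp: is_pPath_def)
  have "\<not> set vs \<subseteq> S"
  proof
    assume "set vs \<subseteq> S"
    then have "card (set vs) \<le> card S" using Ssub finite_subset card_mono by (metis finite_atLeastAtMost)
    moreover have "card (set vs) = p + 1" using L distinct_card by metis
    ultimately show False using cp by simp
  qed
  then obtain x where "x \<in> set vs" "x \<notin> S" by blast
  then show ?thesis using ci_pos[of vs S x] L(3) S0 by simp
qed

lemma spanning:
  fixes l :: "((nat \<times> nat) \<Rightarrow> real) \<Rightarrow> real" and X
  defines "X \<equiv> {incidence (path_arcs vs) | vs. is_pPath n p vs}"
    and "l \<equiv> xsum (cut n S ({0..n} - S))"
  assumes c3: "3 \<le> card S" and cp: "card S \<le> p"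
    and aX: "a \<in> X" and la: "l a = 1" and x1X: "x1 \<in> X" and lx1: "l x1 = 2" and zX: "z \<in> X"
  shows "z - a \<in> span (insert (x1 - a) ((\<lambda>y. y - a) ` {y\<in>X. l y = 1}))"
proof (rule ccontr)
  define B where "B = insert (x1 - a) ((\<lambda>y. y - a) ` {y\<in>X. l y = 1})"
  assume nz: "z - a \<notin> span (insert (x1 - a) ((\<lambda>y. y - a) ` {y\<in>X. l y = 1}))"
  then have nz': "z - a \<notin> span B" unfolding B_def .
  obtain B0 where B0: "B0 \<subseteq> B" "independent B0" "B \<subseteq> span B0"
    using real_vector.maximal_independent_subset by blast
  have spB: "span B \<subseteq> span B0"
    using real_vector.span_minimal[OF B0(3) real_vector.subspace_span] .
  have nz0: "z - a \<notin> span B0"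
  proof
    assume "z - a \<in> span B0"
    moreover have "span B0 \<subseteq> span B" by (rule real_vector.span_mono[OF B0(1)])
    ultimately show False using nz' by blast
  qed
  have ind: "independent (insert (z - a) B0)" using real_vector.independent_insertI[OF nz0 B0(2)] .
  obtain g :: "((nat \<times> nat) \<Rightarrow> real) \<Rightarrow> real" where
    g: "linear g" "\<forall>v\<in>insert (z - a) B0. g v = (if v = z - a then 1 else 0)"
    using real_vector.linear_independent_extend[OF ind, of "\<lambda>v. if v = z - a then 1 else 0"] by blast
  have g0: "g v = 0" if "v \<in> B0" for v
  proof -
    have "v \<noteq> z - a" using that nz0 real_vector.span_base by blast
    then show ?thesis using g(2) that by simp
  qed
  have gB: "g v = 0" if "v \<in> B" for v
    using real_vector.linear_eq_0_on_span[OF g(1)] g0 B0(3) that by blast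
  have gz: "g (z - a) = 1" using g(2) by simp
  define lam where "lam e = g (incidence {e})" for e
  have glsum: "g (incidence (path_arcs vs)) = lsum lam vs" if pv: "is_pPath n p vs" for vs
  proof -
    have fPA: "finite (path_arcs vs)" using path_arcs_sub[OF pv] finite_arcs finite_subset by blast
    have "g (incidence (path_arcs vs)) = g (\<Sum>e\<in>path_arcs vs. incidence {e})"
      using incidence_sum[OF fPA] by simp
    also have "\<dots> = (\<Sum>e\<in>path_arcs vs. lam e)"
      using real_vector.linear_sum[OF g(1)] unfolding lam_def by simp
    also have "\<dots> = lsum lam vs" by (rule lsum_set) (use pv in \<open>simp add: is_pPath_def\<close>)
    finally show ?thesis .
  qed
  have lX: "l (incidence (path_arcs vs)) = lsum (ci S) vs" if "is_pPath n p vs" for vs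
    unfolding l_def by (rule xsum_inc[OF that])
  have H: "lsum lam vs = g a" if "cp1 vs" for vs
  proof -
    have pv: "is_pPath n p vs" "lsum (ci S) vs = 1" using that by (auto simp: cp1_def)
    have yX: "incidence (path_arcs vs) \<in> X" using pv unfolding X_def by blast
    have "l (incidence (path_arcs vs)) = 1" using lX[OF pv(1)] pv(2) by simp
    then have "incidence (path_arcs vs) - a \<in> B" using yX unfolding B_def by blast
    then have "g (incidence (path_arcs vs) - a) = 0" by (rule gB)
    then have "g (incidence (path_arcs vs)) = g a" using real_vector.linear_diff[OF g(1)] by simp
    then show ?thesis using glsum[OF pv(1)] by simp
  qed
  obtain C mu where CM: "\<forall>vs. is_pPath n p vs \<longrightarrow> lsum lam vs = C + mu * lsum (ci S) vs"
    using comb[OF c3 cp H] by blast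
  have val: "g y = C + mu * l y" if yX: "y \<in> X" for y
  proof -
    obtain vs where "y = incidence (path_arcs vs)" "is_pPath n p vs" using yX unfolding X_def by blast
    then show ?thesis using glsum CM lX by simp
  qed
  have ga: "g a = C + mu" using val[OF aX] la by simp
  have gx1: "g x1 = C + 2 * mu" using val[OF x1X] lx1 by simp
  have "x1 - a \<in> B" unfolding B_def by simp
  then have "g (x1 - a) = 0" by (rule gB)
  then have "g x1 = g a" using real_vector.linear_diff[OF g(1)] by simp
  then have mu0: "mu = 0" using ga gx1 by simp
  have "g z = C" using val[OF zX] mu0 by simp
  then have "g (z - a) = 0" using ga mu0 real_vector.linear_diff[OF g(1)] by simp
  then show False using gz by simp
qed

end


theorem theorem12:
  fixes n p :: nat and S :: "nat set"
  assumes "4 \<le> p" and "p \<le> n - 1"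
    and "S \<subset> {0..n}" and "0 \<in> S" and "n \<in> S"
  shows "(valid_ineq (pPathPolytope n p) (cut n S ({0..n} - S)) 1 \<longleftrightarrow> card S \<le> p)
       \<and> (facet_defining (pPathPolytope n p) (cut n S ({0..n} - S)) 1 \<longleftrightarrow>
            3 \<le> card S \<and> card S \<le> p \<and> card ({0..n} - S) \<ge> 2)"
proof -
  interpret pp n p S
    by unfold_locales (use assms in auto)
  define X where "X = {incidence (path_arcs vs) | vs. is_pPath n p vs}"
  define l where "l = xsum (cut n S ({0..n} - S))"
  have P: "pPathPolytope n p = convex hull X" unfolding pPathPolytope_def X_def by simp
  have lin: "linear l" unfolding l_def by (rule xsum_linear)
  have lX: "l (incidence (path_arcs vs)) = lsum (ci S) vs" if "is_pPath n p vs" for vs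
    unfolding l_def by (rule xsum_inc[OF that])
  have fS: "finite S" using Ssub finite_subset by blast
  have V: "valid_ineq (pPathPolytope n p) (cut n S ({0..n} - S)) 1 \<longleftrightarrow> card S \<le> p"
  proof
    assume v: "valid_ineq (pPathPolytope n p) (cut n S ({0..n} - S)) 1"
    show "card S \<le> p"
    proof (rule ccontr)
      assume "\<not> card S \<le> p"
      then obtain vs where vs: "is_pPath n p vs" "lsum (ci S) vs = 0" using exists_c0 by (meson not_le)
      have "incidence (path_arcs vs) \<in> X" using vs unfolding X_def by blast
      moreover have "X \<subseteq> convex hull X" by (rule hull_subset)
      ultimately have "incidence (path_arcs vs) \<in> pPathPolytope n p" unfolding P by (rule subsetD[rotated])
      then have "1 \<le> l (incidence (path_arcs vs))" using v unfolding valid_ineq_def l_def by blast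
      then show False using lX[OF vs(1)] vs(2) by simp
    qed
  next
    assume cp: "card S \<le> p"
    have "X \<subseteq> {x. 1 \<le> l x}"
    proof
      fix x assume "x \<in> X"
      then obtain vs where "x = incidence (path_arcs vs)" "is_pPath n p vs" unfolding X_def by blast
      then show "x \<in> {x. 1 \<le> l x}" using lX valid_paths[OF cp] by simp
    qed
    then have "convex hull X \<subseteq> {x. 1 \<le> l x}"
      using hull_minimal[of X "{x. 1 \<le> l x}" convex] convex_ge[OF lin] by blast
    then show "valid_ineq (pPathPolytope n p) (cut n S ({0..n} - S)) 1"
      unfolding valid_ineq_def P l_def[symmetric] by blast
  qed
  have cV: "card ({0..n} - S) = n + 1 - card S"
    using card_Diff_subset[OF fS Ssub] by simp
  have F: "facet_defining (pPathPolytope n p) (cut n S ({0..n} - S)) 1 \<longleftrightarrow>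
            3 \<le> card S \<and> card S \<le> p \<and> card ({0..n} - S) \<ge> 2"
  proof
    assume f: "facet_defining (pPathPolytope n p) (cut n S ({0..n} - S)) 1"
    then have cp: "card S \<le> p" using V unfolding facet_defining_def by blast
    have c3: "3 \<le> card S"
    proof (rule ccontr)
      assume "\<not> 3 \<le> card S"
      then have c2: "card S \<le> 2" by simp
      have "X \<subseteq> {x. l x = 1}"
      proof
        fix x assume "x \<in> X"
        then obtain vs where "x = incidence (path_arcs vs)" "is_pPath n p vs" unfolding X_def by blast
        then show "x \<in> {x. l x = 1}" using lX all_c1[OF c2] by simp
      qed
      then have "convex hull X \<subseteq> {x. l x = 1}"
        using hull_minimal[of X "{x. l x = 1}" convex] convex_eq[OF lin] by blast
      then have "convex hull X \<inter> {x. l x = 1} = convex hull X" by blast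
      then show False using f unfolding facet_defining_def P l_def[symmetric] by simp
    qed
    show "3 \<le> card S \<and> card S \<le> p \<and> card ({0..n} - S) \<ge> 2"
      using c3 cp cV pn by simp
  next
    assume c: "3 \<le> card S \<and> card S \<le> p \<and> card ({0..n} - S) \<ge> 2"
    then have c3: "3 \<le> card S" and cp: "card S \<le> p" by auto
    obtain va where va: "is_pPath n p va" "lsum (ci S) va = 1" using exists_c1[OF cp] by blast
    obtain v1 where v1: "is_pPath n p v1" "lsum (ci S) v1 = 2" using exists_c2[OF c3 cp] by blast
    define a where "a = incidence (path_arcs va)"
    define x1 where "x1 = incidence (path_arcs v1)"
    have aX: "a \<in> X" unfolding a_def X_def using va by blast
    have x1X: "x1 \<in> X" unfolding x1_def X_def using v1 by blast
    have la: "l a = 1" unfolding a_def using lX[OF va(1)] va(2) by simp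
    have lx1: "l x1 = 2" unfolding x1_def using lX[OF v1(1)] v1(2) by simp
    have spn: "\<forall>z\<in>X. z - a \<in> span (insert (x1 - a) ((\<lambda>y. y - a) ` {y\<in>X. l y = 1}))"
      using spanning[OF c3 cp] aX la x1X lx1 unfolding X_def l_def by blast
    have fX: "finite X" unfolding X_def by (rule finite_X)
    have "affdim (convex hull X \<inter> {x. l x = 1}) = affdim (convex hull X) - 1"
      by (rule facet_from_span[OF fX lin aX la x1X _ spn]) (use lx1 in simp)
    moreover have "valid_ineq (pPathPolytope n p) (cut n S ({0..n} - S)) 1" using V cp by simp
    ultimately show "facet_defining (pPathPolytope n p) (cut n S ({0..n} - S)) 1"
      unfolding facet_defining_def P l_def[symmetric] by simp
  qed
  show ?thesis using V F by blast
qed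


end
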